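(* Consider a mean-variance team stochastic game as described in the context and a joint policy $\boldsymbol{\mu}^*\in\mathcal{U}$. Then $\boldsymbol{\mu}^*$ is a strict local Nash equilibrium if and only if it is a strict local maximum of $J$, i.e. there exists $\bar\delta\in(0,1]$ such that for all $\delta\in(0,\bar\delta]$ and all $\boldsymbol{\mu}=(\mu_1,\dots,\mu_N)\in\mathcal{U}$ with $\boldsymbol{\mu}\neq\boldsymbol{\mu}^*$, $$J(\boldsymbol{\mu}^* )>J\big((1-\delta)\mu_1^*+\delta\mu_1,\dots,(1-\delta)\mu_N^*+\delta\mu_N\big).$$
   Context: Game: finite agents $\mathcal{N}=\{1,\dots,N\}$, finite state space $\mathcal{S}$, finite action sets $\mathcal{A}_i$, $\mathcal{A}=\prod_i\mathcal{A}_i$, transition kernel $P(s'|s,\boldsymbol{a})$, common reward $r:\mathcal{S}\times\mathcal{A}\to\mathbb{R}$. Policies $\mu_i:\mathcal{S}\to\Delta(\mathcal{A}_i)$ (set $\mathcal{U}_i$); joint policies $\boldsymbol{\mu}\in\mathcal{U}=\prod_i\mathcal{U}_i$ with $\boldsymbol{\mu}(\boldsymbol{a}|s)=\prod_i\mu_i(a_i|s)$; $(\mu_i,\boldsymbol{\mu}_{-i})$ means agent $i$ uses $\mu_i$, others use $\boldsymbol{\mu}_{-i}$; $(1-\delta)\mu^*_i+\delta\mu_i$ is the policy $s\mapsto(1-\delta)\mu^*_i(\cdot|s)+\delta\mu_i(\cdot|s)$. Standing assumption: the chain $P^{\boldsymbol{\mu}}(s'|s)=\sum_{\boldsymbol{a}}\boldsymbol{\mu}(\boldsymbol{a}|s)P(s'|s,\boldsymbol{a})$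 is ergodic for every $\boldsymbol{\mu}\in\mathcal{U}$, stationary distribution $\pi^{\boldsymbol{\mu}}$. $\eta(\boldsymbol{\mu})=\sum_s\pi^{\boldsymbol{\mu}}(s)\sum_{\boldsymbol{a}}\boldsymbol{\mu}(\boldsymbol{a}|s)r(s,\boldsymbol{a})$; $\zeta(\boldsymbol{\mu})=\sum_s\pi^{\boldsymbol{\mu}}(s)\sum_{\boldsymbol{a}}\boldsymbol{\mu}(\boldsymbol{a}|s)(r(s,\boldsymbol{a})-\eta(\boldsymbol{\mu}))^2$; for fixed $\beta\ge0$, $J(\boldsymbol{\mu})=\eta(\boldsymbol{\mu})-\beta\zeta(\boldsymbol{\mu})$. A joint policy $\boldsymbol{\mu}^*$ is a strict local Nash equilibrium if there is $\bar\delta\in(0,1]$ such that for all $\delta\in(0,\bar\delta]$, all $i\in\mathcal{N}$ and all $\mu_i\in\mathcal{U}_i$ with $\mu_i\neq\mu_i^*$: $J(\mu_i^*,\boldsymbol{\mu}^*_{-i})>J((1-\delta)\mu_i^*+\delta\mu_i,\boldsymbol{\mu}^*_{-i})$. *)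

theory Defs
  imports Main "HOL-Library.FuncSet" Complex_Main
begin

text \<open>
  Agent i has a finite nonempty action set A i (a subset of a type 'a);
  joint actions are the functions in PiE UNIV A.
  Transition kernel P s a s', common reward r s a.
  A policy of agent i is m :: 's => 'a => real, a probability distribution
  on A i at every state (and 0 outside A i, so that equality of policies
  is equality of functions).
\<close>

definition joint_actions :: "('i \<Rightarrow> 'a set) \<Rightarrow> ('i \<Rightarrow> 'a) set" where
  "joint_actions A = PiE UNIV A"

definition valid_game ::
  "('i::finite \<Rightarrow> 'a set) \<Rightarrow> ('s::finite \<Rightarrow> ('i \<Rightarrow> 'a) \<Rightarrow> 's \<Rightarrow> real) \<Rightarrow> bool" where
  "valid_game A P \<longleftrightarrow>
     (\<forall>i. finite (A i) \<and> A i \<noteq> {}) \<and>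
     (\<forall>s a s'. a \<in> joint_actions A \<longrightarrow> P s a s' \<ge> 0) \<and>
     (\<forall>s a. a \<in> joint_actions A \<longrightarrow> (\<Sum>s'\<in>UNIV. P s a s') = 1)"

definition is_policy :: "'a set \<Rightarrow> ('s \<Rightarrow> 'a \<Rightarrow> real) \<Rightarrow> bool" where
  "is_policy Ai m \<longleftrightarrow>
     (\<forall>s a. m s a \<ge> 0) \<and> (\<forall>s. (\<Sum>a\<in>Ai. m s a) = 1) \<and>
     (\<forall>s a. a \<notin> Ai \<longrightarrow> m s a = 0)"

definition is_joint_policy :: "('i \<Rightarrow> 'a set) \<Rightarrow> ('i \<Rightarrow> 's \<Rightarrow> 'a \<Rightarrow> real) \<Rightarrow> bool" where
  "is_joint_policy A mu \<longleftrightarrow> (\<forall>i. is_policy (A i) (mu i))"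

definition joint_prob :: "('i::finite \<Rightarrow> 's \<Rightarrow> 'a \<Rightarrow> real) \<Rightarrow> 's \<Rightarrow> ('i \<Rightarrow> 'a) \<Rightarrow> real" where
  "joint_prob mu s a = (\<Prod>i\<in>UNIV. mu i s (a i))"

definition chain ::
  "('i::finite \<Rightarrow> 'a set) \<Rightarrow> ('s \<Rightarrow> ('i \<Rightarrow> 'a) \<Rightarrow> 's \<Rightarrow> real) \<Rightarrow>
   ('i \<Rightarrow> 's \<Rightarrow> 'a \<Rightarrow> real) \<Rightarrow> 's \<Rightarrow> 's \<Rightarrow> real" where
  "chain A P mu s s' = (\<Sum>a\<in>joint_actions A. joint_prob mu s a * P s a s')"

fun nstep :: "('s::finite \<Rightarrow> 's \<Rightarrow> real) \<Rightarrow> nat \<Rightarrow> 's \<Rightarrow> 's \<Rightarrow> real" where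
  "nstep Q 0 s s' = (if s = s' then 1 else 0)"
| "nstep Q (Suc n) s s' = (\<Sum>t\<in>UNIV. nstep Q n s t * Q t s')"

definition irreducible_chain :: "('s::finite \<Rightarrow> 's \<Rightarrow> real) \<Rightarrow> bool" where
  "irreducible_chain Q \<longleftrightarrow> (\<forall>s s'. \<exists>n. nstep Q n s s' > 0)"

definition aperiodic_chain :: "('s::finite \<Rightarrow> 's \<Rightarrow> real) \<Rightarrow> bool" where
  "aperiodic_chain Q \<longleftrightarrow> (\<forall>s. Gcd {n. n > 0 \<and> nstep Q n s s > 0} = 1)"

definition ergodic_chain :: "('s::finite \<Rightarrow> 's \<Rightarrow> real) \<Rightarrow> bool" where
  "ergodic_chain Q \<longleftrightarrow> irreducible_chain Q \<and> aperiodic_chain Q"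

definition is_stationary :: "('s::finite \<Rightarrow> 's \<Rightarrow> real) \<Rightarrow> ('s \<Rightarrow> real) \<Rightarrow> bool" where
  "is_stationary Q p \<longleftrightarrow> (\<forall>s. p s \<ge> 0) \<and> (\<Sum>s\<in>UNIV. p s) = 1 \<and>
     (\<forall>s'. p s' = (\<Sum>s\<in>UNIV. p s * Q s s'))"

text \<open>The (unique, under ergodicity) stationary distribution pi^mu.\<close>
definition stat_dist ::
  "('i::finite \<Rightarrow> 'a set) \<Rightarrow> ('s::finite \<Rightarrow> ('i \<Rightarrow> 'a) \<Rightarrow> 's \<Rightarrow> real) \<Rightarrow>
   ('i \<Rightarrow> 's \<Rightarrow> 'a \<Rightarrow> real) \<Rightarrow> 's \<Rightarrow> real" where
  "stat_dist A P mu = (THE p. is_stationary (chain A P mu) p)"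

definition eta ::
  "('i::finite \<Rightarrow> 'a set) \<Rightarrow> ('s::finite \<Rightarrow> ('i \<Rightarrow> 'a) \<Rightarrow> 's \<Rightarrow> real) \<Rightarrow>
   ('s \<Rightarrow> ('i \<Rightarrow> 'a) \<Rightarrow> real) \<Rightarrow> ('i \<Rightarrow> 's \<Rightarrow> 'a \<Rightarrow> real) \<Rightarrow> real" where
  "eta A P r mu = (\<Sum>s\<in>UNIV. stat_dist A P mu s *
       (\<Sum>a\<in>joint_actions A. joint_prob mu s a * r s a))"

definition zeta ::
  "('i::finite \<Rightarrow> 'a set) \<Rightarrow> ('s::finite \<Rightarrow> ('i \<Rightarrow> 'a) \<Rightarrow> 's \<Rightarrow> real) \<Rightarrow>
   ('s \<Rightarrow> ('i \<Rightarrow> 'a) \<Rightarrow> real) \<Rightarrow> ('i \<Rightarrow> 's \<Rightarrow> 'a \<Rightarrow> real) \<Rightarrow> real" where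
  "zeta A P r mu = (\<Sum>s\<in>UNIV. stat_dist A P mu s *
       (\<Sum>a\<in>joint_actions A. joint_prob mu s a * (r s a - eta A P r mu)^2))"

definition Jmv ::
  "('i::finite \<Rightarrow> 'a set) \<Rightarrow> ('s::finite \<Rightarrow> ('i \<Rightarrow> 'a) \<Rightarrow> 's \<Rightarrow> real) \<Rightarrow>
   ('s \<Rightarrow> ('i \<Rightarrow> 'a) \<Rightarrow> real) \<Rightarrow> real \<Rightarrow> ('i \<Rightarrow> 's \<Rightarrow> 'a \<Rightarrow> real) \<Rightarrow> real" where
  "Jmv A P r beta mu = eta A P r mu - beta * zeta A P r mu"

definition mix :: "real \<Rightarrow> ('s \<Rightarrow> 'a \<Rightarrow> real) \<Rightarrow> ('s \<Rightarrow> 'a \<Rightarrow> real) \<Rightarrow> 's \<Rightarrow> 'a \<Rightarrow> real" where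
  "mix d mstar m = (\<lambda>s a. (1 - d) * mstar s a + d * m s a)"

definition strict_local_NE ::
  "('i::finite \<Rightarrow> 'a set) \<Rightarrow> ('s::finite \<Rightarrow> ('i \<Rightarrow> 'a) \<Rightarrow> 's \<Rightarrow> real) \<Rightarrow>
   ('s \<Rightarrow> ('i \<Rightarrow> 'a) \<Rightarrow> real) \<Rightarrow> real \<Rightarrow> ('i \<Rightarrow> 's \<Rightarrow> 'a \<Rightarrow> real) \<Rightarrow> bool" where
  "strict_local_NE A P r beta mustar \<longleftrightarrow>
     (\<exists>db. 0 < db \<and> db \<le> 1 \<and>
        (\<forall>d. 0 < d \<and> d \<le> db \<longrightarrow>
          (\<forall>i m. is_policy (A i) m \<and> m \<noteq> mustar i \<longrightarrow>
             Jmv A P r beta mustar > Jmv A P r beta (mustar(i := mix d (mustar i) m)))))"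

definition strict_local_max ::
  "('i::finite \<Rightarrow> 'a set) \<Rightarrow> ('s::finite \<Rightarrow> ('i \<Rightarrow> 'a) \<Rightarrow> 's \<Rightarrow> real) \<Rightarrow>
   ('s \<Rightarrow> ('i \<Rightarrow> 'a) \<Rightarrow> real) \<Rightarrow> real \<Rightarrow> ('i \<Rightarrow> 's \<Rightarrow> 'a \<Rightarrow> real) \<Rightarrow> bool" where
  "strict_local_max A P r beta mustar \<longleftrightarrow>
     (\<exists>db. 0 < db \<and> db \<le> 1 \<and>
        (\<forall>d. 0 < d \<and> d \<le> db \<longrightarrow>
          (\<forall>mu. is_joint_policy A mu \<and> mu \<noteq> mustar \<longrightarrow>
             Jmv A P r beta mustar > Jmv A P r beta (\<lambda>i. mix d (mustar i) (mu i)))))"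

end

theory Submission
  imports Defs "HOL-Analysis.Analysis"
begin
definition stoch :: "('s::finite \<Rightarrow> 's \<Rightarrow> real) \<Rightarrow> bool" where
  "stoch Q \<longleftrightarrow> (\<forall>s s'. 0 \<le> Q s s') \<and> (\<forall>s. (\<Sum>s'\<in>UNIV. Q s s') = 1)"

definition invar :: "('s::finite \<Rightarrow> 's \<Rightarrow> real) \<Rightarrow> ('s \<Rightarrow> real) \<Rightarrow> bool" where
  "invar Q y \<longleftrightarrow> (\<forall>s'. y s' = (\<Sum>s\<in>UNIV. y s * Q s s'))"

lemma nstep_nonneg:
  assumes "stoch Q" shows "0 \<le> nstep Q n s s'"
proof (induction n arbitrary: s')
  case 0 then show ?case by simp
next
  case (Suc n) then show ?case using assms unfolding stoch_def
    by (auto intro!: sum_nonneg)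
qed

lemma closure_nstep:
  assumes st: "stoch Q" and S0: "S s0"
    and cl: "\<And>s t. S s \<Longrightarrow> Q s t > 0 \<Longrightarrow> S t"
  shows "nstep Q n s0 t > 0 \<Longrightarrow> S t"
proof (induction n arbitrary: t)
  case 0 then show ?case using S0 by (auto split: if_splits)
next
  case (Suc n)
  have "0 < (\<Sum>u\<in>UNIV. nstep Q n s0 u * Q u t)" using Suc.prems by simp
  have "\<exists>u. 0 < nstep Q n s0 u * Q u t"
  proof (rule ccontr)
    assume "\<not> ?thesis"
    then have "(\<Sum>u\<in>UNIV. nstep Q n s0 u * Q u t) \<le> 0" by (intro sum_nonpos) (auto simp: not_less)
    then show False using \<open>0 < (\<Sum>u\<in>UNIV. nstep Q n s0 u * Q u t)\<close> by linarith
  qed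
  then obtain u where u: "0 < nstep Q n s0 u * Q u t" by blast
  have "0 \<le> nstep Q n s0 u" "0 \<le> Q u t" using st nstep_nonneg[OF st] unfolding stoch_def by auto
  with u have "0 < nstep Q n s0 u" "0 < Q u t"
    by (auto simp: zero_less_mult_iff)
  then show ?case using Suc.IH cl by blast
qed

lemma invar_support:
  assumes st: "stoch Q" and irr: "irreducible_chain Q"
    and nn: "\<And>s. 0 \<le> p s" and inv: "invar Q p" and pos: "p s0 > 0"
  shows "p t > 0"
proof -
  obtain n where "nstep Q n s0 t > 0" using irr unfolding irreducible_chain_def by blast
  moreover have "p v > 0" if "p u > 0" "Q u v > 0" for u v
  proof -
    have "p u * Q u v \<le> (\<Sum>w\<in>UNIV. p w * Q w v)"
      by (rule member_le_sum) (use nn st in \<open>simp_all add: stoch_def\<close>)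
    moreover have "p u * Q u v > 0" using that by simp
    moreover have "p v = (\<Sum>w\<in>UNIV. p w * Q w v)" using inv unfolding invar_def by blast
    ultimately show ?thesis by linarith
  qed
  ultimately show ?thesis using closure_nstep[OF st, of "\<lambda>u. p u > 0" s0] pos by blast
qed

lemma invar_pos_part:
  assumes st: "stoch Q" and inv: "invar Q y"
  shows "invar Q (\<lambda>s. max (y s) 0)"
proof -
  let ?z = "\<lambda>s. max (y s) 0"
  have le: "?z s' \<le> (\<Sum>s\<in>UNIV. ?z s * Q s s')" for s'
  proof -
    have Qn: "0 \<le> Q s t" for s t using st unfolding stoch_def by blast
    have "y s' = (\<Sum>s\<in>UNIV. y s * Q s s')" using inv unfolding invar_def by blast
    also have "\<dots> \<le> (\<Sum>s\<in>UNIV. ?z s * Q s s')"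
      by (rule sum_mono) (intro mult_right_mono Qn max.cobounded1)
    finally have 1: "y s' \<le> (\<Sum>s\<in>UNIV. ?z s * Q s s')" .
    have 2: "0 \<le> (\<Sum>s\<in>UNIV. ?z s * Q s s')"
      by (intro sum_nonneg mult_nonneg_nonneg Qn max.cobounded2)
    from 1 2 show ?thesis by (rule max.boundedI)
  qed
  have "(\<Sum>s'\<in>UNIV. \<Sum>s\<in>UNIV. ?z s * Q s s') = (\<Sum>s\<in>UNIV. ?z s * (\<Sum>s'\<in>UNIV. Q s s'))"
    by (subst sum.swap) (simp add: sum_distrib_left)
  also have "\<dots> = (\<Sum>s\<in>UNIV. ?z s)" using st by (simp add: stoch_def)
  finally have "(\<Sum>s'\<in>UNIV. (\<Sum>s\<in>UNIV. ?z s * Q s s') - ?z s') = 0"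
    by (simp add: sum_subtractf)
  then have z: "\<forall>s'\<in>UNIV. (\<Sum>s\<in>UNIV. ?z s * Q s s') - ?z s' = 0"
    by (subst sum_nonneg_eq_0_iff[symmetric]) (use le in auto)
  show ?thesis unfolding invar_def
  proof
    fix s'
    have "(\<Sum>s\<in>UNIV. ?z s * Q s s') - ?z s' = 0" using z by blast
    then show "?z s' = (\<Sum>s\<in>UNIV. ?z s * Q s s')" by linarith
  qed
qed

lemma invar_diff: assumes "invar Q p" "invar Q q" shows "invar Q (\<lambda>s. p s - q s)"
  unfolding invar_def
proof
  fix s'
  have "p s' - q s' = (\<Sum>s\<in>UNIV. p s * Q s s') - (\<Sum>s\<in>UNIV. q s * Q s s')"
    using assms unfolding invar_def by metis
  also have "\<dots> = (\<Sum>s\<in>UNIV. (p s - q s) * Q s s')"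
    by (simp add: left_diff_distrib sum_subtractf)
  finally show "p s' - q s' = (\<Sum>s\<in>UNIV. (p s - q s) * Q s s')" .
qed

lemma invar_scale: assumes "invar Q p" shows "invar Q (\<lambda>s. c * p s)"
  unfolding invar_def
proof
  fix s'
  have "c * p s' = c * (\<Sum>s\<in>UNIV. p s * Q s s')"
    using assms unfolding invar_def by metis
  also have "\<dots> = (\<Sum>s\<in>UNIV. c * p s * Q s s')"
    by (simp add: sum_distrib_left mult.assoc)
  finally show "c * p s' = (\<Sum>s\<in>UNIV. c * p s * Q s s')" .
qed

lemma stationary_invar: "is_stationary Q p \<Longrightarrow> invar Q p"
  unfolding is_stationary_def invar_def by blast

lemma stationary_nonneg: "is_stationary Q p \<Longrightarrow> 0 \<le> p s"
  unfolding is_stationary_def by blast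

lemma stationary_sum: "is_stationary Q p \<Longrightarrow> (\<Sum>s\<in>UNIV. p s) = 1"
  unfolding is_stationary_def by blast

lemma stationary_le:
  assumes st: "stoch Q" and irr: "irreducible_chain Q"
    and p: "is_stationary Q p" and q: "is_stationary Q q"
  shows "p s \<le> q s"
proof (rule ccontr)
  assume "\<not> p s \<le> q s"
  let ?y = "\<lambda>s. p s - q s"
  let ?z = "\<lambda>s. max (?y s) 0"
  have iy: "invar Q ?y" using p q by (intro invar_diff stationary_invar)
  have iz: "invar Q ?z" by (rule invar_pos_part[OF st iy])
  have pos_s: "?z s > 0" using \<open>\<not> p s \<le> q s\<close> by simp
  have nn: "\<And>u. 0 \<le> ?z u" by simp
  have zpos: "?z t > 0" for t by (rule invar_support[OF st irr nn iz pos_s])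
  have ypos: "?y t > 0" for t using zpos[of t] by (simp add: less_max_iff_disj)
  have "(\<Sum>t\<in>UNIV. ?y t) > 0" by (rule sum_pos) (simp, simp, rule ypos)
  moreover have "(\<Sum>t\<in>UNIV. ?y t) = (\<Sum>t\<in>UNIV. p t) - (\<Sum>t\<in>UNIV. q t)" by (rule sum_subtractf)
  ultimately show False using stationary_sum[OF p] stationary_sum[OF q] by linarith
qed

lemma stationary_unique:
  assumes st: "stoch Q" and irr: "irreducible_chain Q"
    and p: "is_stationary Q p" and q: "is_stationary Q q"
  shows "p = q"
  proof
  fix s show "p s = q s" using stationary_le[OF st irr p q, of s] stationary_le[OF st irr q p, of s] by linarith
qed

lemma stationary_pos:
  assumes st: "stoch Q" and irr: "irreducible_chain Q" and p: "is_stationary Q p"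
  shows "p s > 0"
proof -
  have "\<exists>s0. p s0 > 0"
  proof (rule ccontr)
    assume "\<not> ?thesis"
    then have "(\<Sum>t\<in>UNIV. p t) \<le> 0" by (intro sum_nonpos) (auto simp: not_less)
    then show False using stationary_sum[OF p] by simp
  qed
  then obtain s0 where "p s0 > 0" by blast
  then show ?thesis by (rule invar_support[OF st irr stationary_nonneg[OF p] stationary_invar[OF p]])
qed

lemma harmonic_const:
  assumes st: "stoch Q" and irr: "irreducible_chain Q"
    and h: "\<And>s. h s = (\<Sum>t\<in>UNIV. Q s t * h t)"
  shows "h s = h s'"
proof -
  define M where "M = Max (range h)"
  have hle: "h t \<le> M" for t unfolding M_def by (rule Max_ge) auto
  have "M \<in> range h" unfolding M_def by (rule Max_in) auto
  then obtain s0 where s0: "h s0 = M" by auto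
  have Qn: "0 \<le> Q s t" for s t using st unfolding stoch_def by blast
  have Q1: "(\<Sum>t\<in>UNIV. Q s t) = 1" for s using st unfolding stoch_def by blast
  have cl: "h t = M" if hu: "h u = M" and q: "Q u t > 0" for u t
  proof -
    have "(\<Sum>w\<in>UNIV. Q u w * (M - h w)) = M * (\<Sum>w\<in>UNIV. Q u w) - (\<Sum>w\<in>UNIV. Q u w * h w)"
      by (simp add: right_diff_distrib sum_subtractf sum_distrib_left mult.commute)
    also have "\<dots> = 0" using Q1[of u] h[of u] hu by simp
    finally have z: "(\<Sum>w\<in>UNIV. Q u w * (M - h w)) = 0" .
    have nn: "\<forall>w\<in>UNIV. 0 \<le> Q u w * (M - h w)"
      using Qn hle by (simp add: mult_nonneg_nonneg)
    have "Q u t * (M - h t) = 0" using z nn sum_nonneg_eq_0_iff[of UNIV "\<lambda>w. Q u w * (M - h w)"] by simp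
    then show ?thesis using q by simp
  qed
  have all: "h t = M" for t
  proof -
    obtain n where "nstep Q n s0 t > 0" using irr unfolding irreducible_chain_def by blast
    then show ?thesis using closure_nstep[of Q "\<lambda>u. h u = M" s0 n t] st s0 cl by blast
  qed
  show ?thesis using all[of s] all[of s'] by simp
qed

lemma stat_swap:
  assumes p: "is_stationary Q p"
  shows "(\<Sum>i\<in>UNIV. p i * (\<Sum>j\<in>UNIV. Q i j * x j)) = (\<Sum>j\<in>UNIV. p j * x j)"
proof -
  have "(\<Sum>i\<in>UNIV. p i * (\<Sum>j\<in>UNIV. Q i j * x j)) = (\<Sum>j\<in>UNIV. (\<Sum>i\<in>UNIV. p i * Q i j) * x j)"
    by (simp add: sum_distrib_left sum_distrib_right mult.assoc) (rule sum.swap)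
  also have "\<dots> = (\<Sum>j\<in>UNIV. p j * x j)"
  proof (rule sum.cong)
    fix j
    have "p j = (\<Sum>i\<in>UNIV. p i * Q i j)" using p unfolding is_stationary_def by blast
    then show "(\<Sum>i\<in>UNIV. p i * Q i j) * x j = p j * x j" by simp
  qed simp
  finally show ?thesis .
qed

lemma stationary_exists:
  fixes Q :: "'s::finite \<Rightarrow> 's \<Rightarrow> real"
  assumes st: "stoch Q" and irr: "irreducible_chain Q"
  shows "\<exists>p. is_stationary Q p"
proof -
  define M :: "real^'s^'s" where "M = (\<chi> i j. (if i = j then 1 else 0) - Q i j)"
  have Q1: "(\<Sum>t\<in>UNIV. Q s t) = 1" for s using st unfolding stoch_def by blast
  have "M *v (\<chi> j. 1) = 0"
  proof -
    have "(M *v (\<chi> j. 1)) $ i = 0" for i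
      unfolding M_def matrix_vector_mult_def using Q1[of i] by (simp add: sum_subtractf)
    then show ?thesis by (simp add: vec_eq_iff)
  qed
  moreover have "(\<chi> j. (1::real)) \<noteq> 0" by (simp add: vec_eq_iff)
  ultimately have nl: "\<not> (\<exists>B. B ** M = mat 1)" unfolding matrix_left_invertible_ker by blast
  have "\<exists>y. y \<noteq> 0 \<and> transpose M *v y = 0"
  proof (rule ccontr)
    assume "\<not> ?thesis"
    then have "\<forall>y. transpose M *v y = 0 \<longrightarrow> y = 0" by blast
    then obtain B where "B ** transpose M = mat 1" using matrix_left_invertible_ker by blast
    then have "transpose (B ** transpose M) = mat 1" by simp
    then have "M ** transpose B = mat 1" by (simp add: matrix_transpose_mul)
    then have "transpose B ** M = mat 1" using matrix_left_right_inverse by blast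
    then show False using nl by blast
  qed
  then obtain y where y0: "y \<noteq> 0" and yM: "transpose M *v y = 0" by blast
  define f where "f s = y $ s" for s
  have invf: "invar Q f" unfolding invar_def
  proof
    fix j
    have "(y v* M) $ j = 0" using yM by simp
    then have "(\<Sum>i\<in>UNIV. y $ i * ((if i = j then 1 else 0) - Q i j)) = 0"
      unfolding M_def vector_matrix_mult_def by simp
    moreover have "y $ i * ((if i = j then 1 else 0) - Q i j) = (if i = j then y $ i else 0) - y $ i * Q i j" for i
      by (simp add: algebra_simps)
    ultimately have "(\<Sum>i\<in>UNIV. (if i = j then y $ i else 0) - y $ i * Q i j) = 0"
      by simp
    then have "y $ j - (\<Sum>i\<in>UNIV. y $ i * Q i j) = 0"
      by (simp add: sum_subtractf)
    then show "f j = (\<Sum>i\<in>UNIV. f i * Q i j)" unfolding f_def by simp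
  qed
  obtain s1 where "f s1 \<noteq> 0" using y0 unfolding f_def by (auto simp: vec_eq_iff)
  then obtain g s0 where ig: "invar Q g" and gpos: "g s0 > 0"
  proof (cases "f s1 > 0")
    case True show ?thesis by (rule that[OF invf True])
  next
    case False
    then have "(\<lambda>s. (-1) * f s) s1 > 0" using \<open>f s1 \<noteq> 0\<close> by simp
    then show ?thesis using that[OF invar_scale[OF invf, of "-1"]] by blast
  qed
  define z where "z s = max (g s) 0" for s
  have iz: "invar Q z" unfolding z_def by (rule invar_pos_part[OF st ig])
  have znn: "0 \<le> z s" for s unfolding z_def by simp
  have "z s0 \<le> (\<Sum>s\<in>UNIV. z s)" by (rule member_le_sum) (simp_all add: znn)
  moreover have "z s0 > 0" unfolding z_def using gpos by simp
  ultimately have Zpos: "(\<Sum>s\<in>UNIV. z s) > 0" by linarith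
  define p where "p s = (1 / (\<Sum>s\<in>UNIV. z s)) * z s" for s
  have "is_stationary Q p" unfolding is_stationary_def
  proof (intro conjI allI)
    fix s show "0 \<le> p s" unfolding p_def using Zpos znn by simp
  next
    show "(\<Sum>s\<in>UNIV. p s) = 1" unfolding p_def using Zpos by (simp add: sum_divide_distrib[symmetric])
  next
    fix s'
    show "p s' = (\<Sum>s\<in>UNIV. p s * Q s s')"
      using invar_scale[OF iz, of "1 / (\<Sum>s\<in>UNIV. z s)"] unfolding invar_def p_def by blast
  qed
  then show ?thesis by blast
qed

lemma poisson_exists:
  fixes Q :: "'s::finite \<Rightarrow> 's \<Rightarrow> real"
  assumes st: "stoch Q" and irr: "irreducible_chain Q" and p: "is_stationary Q p"
    and v: "(\<Sum>s\<in>UNIV. p s * v s) = 0"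
  shows "\<exists>h. \<forall>s. h s = v s + (\<Sum>t\<in>UNIV. Q s t * h t)"
proof -
  define M :: "real^'s^'s" where "M = (\<chi> i j. (if i = j then 1 else 0) - Q i j + p j)"
  have p1: "(\<Sum>s\<in>UNIV. p s) = 1" by (rule stationary_sum[OF p])
  have Mv: "(M *v x) $ i = x $ i - (\<Sum>j\<in>UNIV. Q i j * x $ j) + (\<Sum>j\<in>UNIV. p j * x $ j)" for x i
  proof -
    have "(M *v x) $ i = (\<Sum>j\<in>UNIV. ((if i = j then 1 else 0) - Q i j + p j) * x $ j)"
      unfolding M_def matrix_vector_mult_def by simp
    also have "\<dots> = (\<Sum>j\<in>UNIV. (if i = j then x $ j else 0) - Q i j * x $ j + p j * x $ j)"
      by (rule sum.cong) (simp_all add: algebra_simps)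
    also have "\<dots> = x $ i - (\<Sum>j\<in>UNIV. Q i j * x $ j) + (\<Sum>j\<in>UNIV. p j * x $ j)"
      by (simp add: sum.distrib sum_subtractf)
    finally show ?thesis .
  qed
  have key: "(\<Sum>i\<in>UNIV. p i * (M *v x) $ i) = (\<Sum>j\<in>UNIV. p j * x $ j)" for x
  proof -
    have "(\<Sum>i\<in>UNIV. p i * (M *v x) $ i) = (\<Sum>i\<in>UNIV. p i * x $ i) - (\<Sum>i\<in>UNIV. p i * (\<Sum>j\<in>UNIV. Q i j * x $ j))
        + (\<Sum>i\<in>UNIV. p i) * (\<Sum>j\<in>UNIV. p j * x $ j)"
    proof -
      have "(\<Sum>i\<in>UNIV. p i * (M *v x) $ i) = (\<Sum>i\<in>UNIV. p i * x $ i - p i * (\<Sum>j\<in>UNIV. Q i j * x $ j)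
          + p i * (\<Sum>j\<in>UNIV. p j * x $ j))"
        by (rule sum.cong) (simp_all only: Mv ring_distribs)
      also have "\<dots> = (\<Sum>i\<in>UNIV. p i * x $ i) - (\<Sum>i\<in>UNIV. p i * (\<Sum>j\<in>UNIV. Q i j * x $ j))
          + (\<Sum>i\<in>UNIV. p i * (\<Sum>j\<in>UNIV. p j * x $ j))"
        by (simp only: sum.distrib sum_subtractf)
      also have "(\<Sum>i\<in>UNIV. p i * (\<Sum>j\<in>UNIV. p j * x $ j)) = (\<Sum>i\<in>UNIV. p i) * (\<Sum>j\<in>UNIV. p j * x $ j)"
        by (rule sum_distrib_right[symmetric])
      finally show ?thesis .
    qed
    also have "\<dots> = (\<Sum>j\<in>UNIV. p j * x $ j)"
      using stat_swap[OF p, of "\<lambda>j. x $ j"] p1 by simp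
    finally show ?thesis .
  qed
  have inj: "\<forall>x. M *v x = 0 \<longrightarrow> x = 0"
  proof (intro allI impI)
    fix x assume x0: "M *v x = 0"
    have c0: "(\<Sum>j\<in>UNIV. p j * x $ j) = 0" using key[of x] x0 by simp
    have harm: "x $ s = (\<Sum>t\<in>UNIV. Q s t * x $ t)" for s
      using Mv[of x s] x0 c0 by simp
    have const: "x $ s = x $ s'" for s s'
      by (rule harmonic_const[OF st irr, of "\<lambda>s. x $ s"]) (rule harm)
    obtain s0 :: 's where True by blast
    have "(\<Sum>j\<in>UNIV. p j * x $ j) = (\<Sum>j\<in>UNIV. p j * x $ s0)"
    proof (rule sum.cong)
      fix j show "p j * x $ j = p j * x $ s0" using const[of j s0] by simp
    qed simp
    also have "\<dots> = x $ s0" using p1 by (simp add: sum_distrib_right[symmetric])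
    finally have "x $ s0 = 0" using c0 by simp
    show "x = 0"
      unfolding vec_eq_iff
    proof
      fix i show "x $ i = 0 $ i" using const[of i s0] \<open>x $ s0 = 0\<close> by simp
    qed
  qed
  then obtain B where "B ** M = mat 1" using matrix_left_invertible_ker by blast
  then have MB: "M ** B = mat 1" using matrix_left_right_inverse by blast
  define w :: "real^'s" where "w = (\<chi> i. v i)"
  define x where "x = B *v w"
  have Mx: "M *v x = w" unfolding x_def by (simp add: matrix_vector_mul_assoc MB)
  have "(\<Sum>j\<in>UNIV. p j * x $ j) = (\<Sum>i\<in>UNIV. p i * w $ i)" using key[of x] Mx by simp
  also have "\<dots> = 0" unfolding w_def using v by simp
  finally have c0: "(\<Sum>j\<in>UNIV. p j * x $ j) = 0" .
  have "x $ s = v s + (\<Sum>t\<in>UNIV. Q s t * x $ t)" for s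
    using Mv[of x s] Mx c0 unfolding w_def by simp
  then show ?thesis by blast
qed

lemma JA_finite: "valid_game A P \<Longrightarrow> finite (joint_actions A)"
  unfolding joint_actions_def valid_game_def by (intro finite_PiE) auto

lemma sum_prod_JA:
  fixes f :: "'i::finite \<Rightarrow> 'a \<Rightarrow> real"
  assumes "valid_game A P"
  shows "(\<Sum>a\<in>joint_actions A. \<Prod>i\<in>UNIV. f i (a i)) = (\<Prod>i\<in>UNIV. \<Sum>b\<in>A i. f i b)"
  using prod_sum_PiE[of UNIV A f] assms unfolding joint_actions_def valid_game_def by simp

lemma policy_nonneg: "is_policy Ai m \<Longrightarrow> 0 \<le> m s b"
  unfolding is_policy_def by blast
lemma policy_sum: "is_policy Ai m \<Longrightarrow> (\<Sum>b\<in>Ai. m s b) = 1"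
  unfolding is_policy_def by blast
lemma policy_out: "is_policy Ai m \<Longrightarrow> b \<notin> Ai \<Longrightarrow> m s b = 0"
  unfolding is_policy_def by blast

lemma jp_nonneg: "is_joint_policy A mu \<Longrightarrow> 0 \<le> joint_prob mu s a"
  unfolding joint_prob_def is_joint_policy_def by (intro prod_nonneg) (auto intro: policy_nonneg)

lemma jp_sum:
  assumes g: "valid_game A P" and mu: "is_joint_policy A mu"
  shows "(\<Sum>a\<in>joint_actions A. joint_prob mu s a) = 1"
proof -
  have "(\<Sum>a\<in>joint_actions A. joint_prob mu s a) = (\<Prod>i\<in>UNIV. \<Sum>b\<in>A i. mu i s b)"
    unfolding joint_prob_def by (rule sum_prod_JA[OF g])
  also have "\<dots> = 1" using mu unfolding is_joint_policy_def by (simp add: policy_sum)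
  finally show ?thesis .
qed

lemma chain_stoch:
  assumes g: "valid_game A P" and mu: "is_joint_policy A mu"
  shows "stoch (chain A P mu)"
  unfolding stoch_def
proof (intro conjI allI)
  fix s s'
  show "0 \<le> chain A P mu s s'"
    unfolding chain_def using g jp_nonneg[OF mu] unfolding valid_game_def
    by (intro sum_nonneg mult_nonneg_nonneg) auto
next
  fix s
  have "(\<Sum>s'\<in>UNIV. chain A P mu s s') = (\<Sum>a\<in>joint_actions A. joint_prob mu s a * (\<Sum>s'\<in>UNIV. P s a s'))"
    unfolding chain_def by (simp add: sum_distrib_left) (rule sum.swap)
  also have "\<dots> = (\<Sum>a\<in>joint_actions A. joint_prob mu s a)"
    using g unfolding valid_game_def by (intro sum.cong) auto
  also have "\<dots> = 1" by (rule jp_sum[OF g mu])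
  finally show "(\<Sum>s'\<in>UNIV. chain A P mu s s') = 1" .
qed

lemma stat_dist_props:
  assumes g: "valid_game A P" and erg: "\<And>mu. is_joint_policy A mu \<Longrightarrow> ergodic_chain (chain A P mu)"
    and mu: "is_joint_policy A mu"
  shows "is_stationary (chain A P mu) (stat_dist A P mu)" "\<And>s. stat_dist A P mu s > 0"
proof -
  have st: "stoch (chain A P mu)" by (rule chain_stoch[OF g mu])
  have irr: "irreducible_chain (chain A P mu)" using erg[OF mu] unfolding ergodic_chain_def by blast
  obtain p where p: "is_stationary (chain A P mu) p" using stationary_exists[OF st irr] by blast
  have "\<exists>!p. is_stationary (chain A P mu) p"
    using p stationary_unique[OF st irr] by blast
  then show 1: "is_stationary (chain A P mu) (stat_dist A P mu)"
    unfolding stat_dist_def by (rule theI')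
  show "\<And>s. stat_dist A P mu s > 0" by (rule stationary_pos[OF st irr 1])
qed

definition avg where
  "avg A P g mu = (\<Sum>s\<in>UNIV. stat_dist A P mu s * (\<Sum>a\<in>joint_actions A. joint_prob mu s a * g s a))"

lemma avg_lin:
  "avg A P (\<lambda>s a. f1 s a + c * f2 s a) mu = avg A P f1 mu + c * avg A P f2 mu"
  unfolding avg_def
  by (simp add: algebra_simps sum.distrib sum_distrib_left)

lemma avg_const:
  assumes g: "valid_game A P" and erg: "\<And>mu. is_joint_policy A mu \<Longrightarrow> ergodic_chain (chain A P mu)"
    and mu: "is_joint_policy A mu"
  shows "avg A P (\<lambda>s a. c) mu = c"
proof -
  have "avg A P (\<lambda>s a. c) mu = (\<Sum>s\<in>UNIV. stat_dist A P mu s * c)"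
    unfolding avg_def by (simp add: sum_distrib_right[symmetric] jp_sum[OF g mu])
  also have "\<dots> = c" using stationary_sum[OF stat_dist_props(1)[OF g erg mu]]
    by (simp add: sum_distrib_right[symmetric])
  finally show ?thesis .
qed

lemma J_avg:
  assumes g: "valid_game A P" and erg: "\<And>mu. is_joint_policy A mu \<Longrightarrow> ergodic_chain (chain A P mu)"
    and mu: "is_joint_policy A mu"
  shows "Jmv A P r beta mu = avg A P r mu - beta * avg A P (\<lambda>s a. (r s a)^2) mu + beta * (avg A P r mu)^2"
proof -
  have e: "eta A P r mu = avg A P r mu" unfolding eta_def avg_def by simp
  define E where "E = avg A P r mu"
  have "zeta A P r mu = avg A P (\<lambda>s a. (r s a - E)^2) mu" unfolding zeta_def avg_def e E_def by simp
  also have "(\<lambda>s a. (r s a - E)^2) = (\<lambda>s a. ((r s a)^2 + (-2*E) * r s a) + E^2 * 1)"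
    by (simp add: power2_eq_square algebra_simps)
  also have "avg A P \<dots> mu = avg A P (\<lambda>s a. (r s a)^2) mu + (-2*E) * E + E^2 * 1"
    unfolding avg_lin E_def using avg_const[OF g erg mu, of 1] by simp
  finally have z: "zeta A P r mu = avg A P (\<lambda>s a. (r s a)^2) mu - E^2"
    by (simp add: power2_eq_square)
  show ?thesis unfolding Jmv_def e z E_def by (simp add: right_diff_distrib)
qed

lemma sum_jp_q:
  "(\<Sum>a\<in>joint_actions A. joint_prob mu s a * (f s a + (\<Sum>t\<in>UNIV. P s a t * h t)))
   = (\<Sum>a\<in>joint_actions A. joint_prob mu s a * f s a) + (\<Sum>t\<in>UNIV. chain A P mu s t * h t)"
proof -
  have "(\<Sum>a\<in>joint_actions A. joint_prob mu s a * (f s a + (\<Sum>t\<in>UNIV. P s a t * h t)))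
     = (\<Sum>a\<in>joint_actions A. joint_prob mu s a * f s a) + (\<Sum>a\<in>joint_actions A. \<Sum>t\<in>UNIV. joint_prob mu s a * P s a t * h t)"
    by (simp add: distrib_left sum.distrib sum_distrib_left mult.assoc)
  also have "(\<Sum>a\<in>joint_actions A. \<Sum>t\<in>UNIV. joint_prob mu s a * P s a t * h t) = (\<Sum>t\<in>UNIV. chain A P mu s t * h t)"
    unfolding chain_def by (subst sum.swap) (simp add: sum_distrib_right)
  finally show ?thesis .
qed

lemma perf_diff:
  fixes A :: "'i::finite \<Rightarrow> 'a set" and P :: "'s::finite \<Rightarrow> ('i \<Rightarrow> 'a) \<Rightarrow> 's \<Rightarrow> real"
    and mustar :: "'i \<Rightarrow> 's \<Rightarrow> 'a \<Rightarrow> real"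
  assumes g: "valid_game A P" and erg: "\<And>mu. is_joint_policy A mu \<Longrightarrow> ergodic_chain (chain A P mu)"
    and ms: "is_joint_policy A mustar"
  shows "\<exists>q. \<forall>mu::'i \<Rightarrow> 's \<Rightarrow> 'a \<Rightarrow> real. is_joint_policy A mu \<longrightarrow> avg A P f mu - avg A P f mustar =
     (\<Sum>s\<in>UNIV. stat_dist A P mu s * (\<Sum>a\<in>joint_actions A. (joint_prob mu s a - joint_prob mustar s a) * q s a))"
proof -
  let ?Q = "chain A P mustar" and ?p = "stat_dist A P mustar"
  define e where "e = avg A P f mustar"
  define v where "v s = (\<Sum>a\<in>joint_actions A. joint_prob mustar s a * f s a) - e" for s
  have pst: "is_stationary ?Q ?p" by (rule stat_dist_props(1)[OF g erg ms])
  have st: "stoch ?Q" by (rule chain_stoch[OF g ms])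
  have irr: "irreducible_chain ?Q" using erg[OF ms] unfolding ergodic_chain_def by blast
  have "(\<Sum>s\<in>UNIV. ?p s * v s) = avg A P f mustar - (\<Sum>s\<in>UNIV. ?p s) * e"
    unfolding v_def avg_def by (simp add: right_diff_distrib sum_subtractf sum_distrib_right)
  also have "\<dots> = 0" using stationary_sum[OF pst] unfolding e_def by simp
  finally have v0: "(\<Sum>s\<in>UNIV. ?p s * v s) = 0" .
  obtain h where h: "\<And>s. h s = v s + (\<Sum>t\<in>UNIV. ?Q s t * h t)"
    using poisson_exists[OF st irr pst v0] by blast
  define q where "q s a = f s a + (\<Sum>t\<in>UNIV. P s a t * h t)" for s a
  have qstar: "(\<Sum>a\<in>joint_actions A. joint_prob mustar s a * q s a) = h s + e" for s
  proof -
    have "(\<Sum>a\<in>joint_actions A. joint_prob mustar s a * q s a)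
        = (\<Sum>a\<in>joint_actions A. joint_prob mustar s a * f s a) + (\<Sum>t\<in>UNIV. ?Q s t * h t)"
      unfolding q_def by (rule sum_jp_q)
    also have "\<dots> = h s + e" using h[of s] unfolding v_def by simp
    finally show ?thesis .
  qed
  show ?thesis
  proof (intro exI allI impI)
    fix mu :: "'i \<Rightarrow> 's \<Rightarrow> 'a \<Rightarrow> real" assume mu: "is_joint_policy A mu"
    let ?pm = "stat_dist A P mu"
    have pmst: "is_stationary (chain A P mu) ?pm" by (rule stat_dist_props(1)[OF g erg mu])
    have "(\<Sum>s\<in>UNIV. ?pm s * (\<Sum>a\<in>joint_actions A. (joint_prob mu s a - joint_prob mustar s a) * q s a))
        = (\<Sum>s\<in>UNIV. ?pm s * ((\<Sum>a\<in>joint_actions A. joint_prob mu s a * f s a)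
            + (\<Sum>t\<in>UNIV. chain A P mu s t * h t) - (h s + e)))"
    proof (rule sum.cong)
      fix s
      have "(\<Sum>a\<in>joint_actions A. (joint_prob mu s a - joint_prob mustar s a) * q s a)
          = (\<Sum>a\<in>joint_actions A. joint_prob mu s a * q s a) - (\<Sum>a\<in>joint_actions A. joint_prob mustar s a * q s a)"
        by (simp add: left_diff_distrib sum_subtractf)
      also have "\<dots> = (\<Sum>a\<in>joint_actions A. joint_prob mu s a * f s a)
            + (\<Sum>t\<in>UNIV. chain A P mu s t * h t) - (h s + e)"
        unfolding qstar unfolding q_def sum_jp_q ..
      finally show "?pm s * (\<Sum>a\<in>joint_actions A. (joint_prob mu s a - joint_prob mustar s a) * q s a)
        = ?pm s * ((\<Sum>a\<in>joint_actions A. joint_prob mu s a * f s a)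
            + (\<Sum>t\<in>UNIV. chain A P mu s t * h t) - (h s + e))" by simp
    qed simp
    also have "\<dots> = avg A P f mu + (\<Sum>s\<in>UNIV. ?pm s * (\<Sum>t\<in>UNIV. chain A P mu s t * h t))
         - (\<Sum>s\<in>UNIV. ?pm s * h s) - (\<Sum>s\<in>UNIV. ?pm s) * e"
      unfolding avg_def
      by (simp add: algebra_simps sum.distrib sum_subtractf sum_distrib_right sum_distrib_left)
    also have "\<dots> = avg A P f mu - e"
      using stat_swap[OF pmst, of h] stationary_sum[OF pmst] by simp
    finally show "avg A P f mu - avg A P f mustar =
     (\<Sum>s\<in>UNIV. ?pm s * (\<Sum>a\<in>joint_actions A. (joint_prob mu s a - joint_prob mustar s a) * q s a))"
      unfolding e_def by simp
  qed
qed

lemma J_decomp: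
  fixes A :: "'i::finite \<Rightarrow> 'a set" and P :: "'s::finite \<Rightarrow> ('i \<Rightarrow> 'a) \<Rightarrow> 's \<Rightarrow> real"
    and mustar :: "'i \<Rightarrow> 's \<Rightarrow> 'a \<Rightarrow> real"
  assumes g: "valid_game A P" and erg: "\<And>mu. is_joint_policy A mu \<Longrightarrow> ergodic_chain (chain A P mu)"
    and ms: "is_joint_policy A mustar"
  shows "\<exists>qg qr. \<forall>mu::'i \<Rightarrow> 's \<Rightarrow> 'a \<Rightarrow> real. is_joint_policy A mu \<longrightarrow> Jmv A P r beta mu - Jmv A P r beta mustar =
     (\<Sum>s\<in>UNIV. stat_dist A P mu s * (\<Sum>a\<in>joint_actions A. (joint_prob mu s a - joint_prob mustar s a) * qg s a))
     + beta * (\<Sum>s\<in>UNIV. stat_dist A P mu s * (\<Sum>a\<in>joint_actions A. (joint_prob mu s a - joint_prob mustar s a) * qr s a))^2"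
proof -
  define E where "E = avg A P r mustar"
  define gf where "gf s a = (r s a + (- beta) * (r s a)^2) + (2 * beta * E) * r s a" for s a
  obtain qg where qg: "\<forall>mu::'i \<Rightarrow> 's \<Rightarrow> 'a \<Rightarrow> real. is_joint_policy A mu \<longrightarrow> avg A P gf mu - avg A P gf mustar =
     (\<Sum>s\<in>UNIV. stat_dist A P mu s * (\<Sum>a\<in>joint_actions A. (joint_prob mu s a - joint_prob mustar s a) * qg s a))"
    using perf_diff[OF g erg ms] by blast
  obtain qr where qr: "\<forall>mu::'i \<Rightarrow> 's \<Rightarrow> 'a \<Rightarrow> real. is_joint_policy A mu \<longrightarrow> avg A P r mu - avg A P r mustar =
     (\<Sum>s\<in>UNIV. stat_dist A P mu s * (\<Sum>a\<in>joint_actions A. (joint_prob mu s a - joint_prob mustar s a) * qr s a))"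
    using perf_diff[OF g erg ms] by blast
  have ag: "avg A P gf mu = avg A P r mu - beta * avg A P (\<lambda>s a. (r s a)^2) mu + 2 * beta * E * avg A P r mu" for mu
    unfolding gf_def avg_lin by simp
  show ?thesis
  proof (intro exI allI impI)
    fix mu :: "'i \<Rightarrow> 's \<Rightarrow> 'a \<Rightarrow> real" assume mu: "is_joint_policy A mu"
    have "Jmv A P r beta mu - Jmv A P r beta mustar = (avg A P gf mu - avg A P gf mustar) + beta * (avg A P r mu - avg A P r mustar)^2"
    proof -
      have j1: "Jmv A P r beta mu = avg A P r mu - beta * avg A P (\<lambda>s a. (r s a)^2) mu + beta * (avg A P r mu)^2"
        by (rule J_avg[OF g erg mu])
      have j2: "Jmv A P r beta mustar = avg A P r mustar - beta * avg A P (\<lambda>s a. (r s a)^2) mustar + beta * (avg A P r mustar)^2"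
        by (rule J_avg[OF g erg ms])
      show ?thesis unfolding j1 j2 ag E_def by (simp add: power2_eq_square algebra_simps)
    qed
    then show "Jmv A P r beta mu - Jmv A P r beta mustar =
     (\<Sum>s\<in>UNIV. stat_dist A P mu s * (\<Sum>a\<in>joint_actions A. (joint_prob mu s a - joint_prob mustar s a) * qg s a))
     + beta * (\<Sum>s\<in>UNIV. stat_dist A P mu s * (\<Sum>a\<in>joint_actions A. (joint_prob mu s a - joint_prob mustar s a) * qr s a))^2"
      using qg mu qr by simp
  qed
qed

definition dev :: "('i::finite \<Rightarrow> 'a set) \<Rightarrow> ('s \<Rightarrow> ('i \<Rightarrow> 'a) \<Rightarrow> real) \<Rightarrow> ('i \<Rightarrow> 's \<Rightarrow> 'a \<Rightarrow> real)
   \<Rightarrow> ('i \<Rightarrow> 's \<Rightarrow> 'a \<Rightarrow> real) \<Rightarrow> 's \<Rightarrow> real" where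
  "dev A q mustar mu s = (\<Sum>a\<in>joint_actions A. (joint_prob mu s a - joint_prob mustar s a) * q s a)"

lemma jp_upd:
  "joint_prob (mu(i := m)) s a = m s (a i) * (\<Prod>j\<in>UNIV - {i}. mu j s (a j))"
proof -
  have "joint_prob (mu(i := m)) s a = (mu(i := m)) i s (a i) * (\<Prod>j\<in>UNIV - {i}. (mu(i := m)) j s (a j))"
    unfolding joint_prob_def by (rule prod.remove) auto
  also have "(\<Prod>j\<in>UNIV - {i}. (mu(i := m)) j s (a j)) = (\<Prod>j\<in>UNIV - {i}. mu j s (a j))"
    by (rule prod.cong) auto
  finally show ?thesis by (simp only: fun_upd_same)
qed

lemma jp_self: "joint_prob mu s a = mu i s (a i) * (\<Prod>j\<in>UNIV - {i}. mu j s (a j))"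
  using jp_upd[of mu i "mu i" s a] by simp

lemma jp_upd_diff:
  "joint_prob (mu(i := m)) s a - joint_prob mu s a = (m s (a i) - mu i s (a i)) * (\<Prod>j\<in>UNIV - {i}. mu j s (a j))"
  using jp_upd[of mu i m s a] jp_self[of mu s a i] by (simp add: left_diff_distrib)

lemma dev_mix:
  "dev A q mustar (mustar(i := mix d (mustar i) m)) s = d * dev A q mustar (mustar(i := m)) s"
  unfolding dev_def sum_distrib_left
proof (rule sum.cong)
  fix a
  show "(joint_prob (mustar(i := mix d (mustar i) m)) s a - joint_prob mustar s a) * q s a =
        d * ((joint_prob (mustar(i := m)) s a - joint_prob mustar s a) * q s a)"
    unfolding jp_upd_diff mix_def by (simp add: algebra_simps)
qed simp

lemma dev_same:
  assumes "m s = mustar i s"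
  shows "dev A q mustar (mustar(i := m)) s = 0"
  unfolding dev_def jp_upd_diff using assms by simp

lemma joint_upd: "is_joint_policy A mu \<Longrightarrow> is_policy (A i) m \<Longrightarrow> is_joint_policy A (mu(i := m))"
  unfolding is_joint_policy_def by auto

lemma mix_policy:
  assumes m1: "is_policy Ai m1" and m2: "is_policy Ai m2" and d: "0 \<le> d" "d \<le> 1"
  shows "is_policy Ai (mix d m1 m2)"
  unfolding is_policy_def mix_def
proof (intro conjI allI impI)
  fix s a show "0 \<le> (1 - d) * m1 s a + d * m2 s a"
    using policy_nonneg[OF m1] policy_nonneg[OF m2] d by (intro add_nonneg_nonneg mult_nonneg_nonneg) auto
next
  fix s show "(\<Sum>a\<in>Ai. (1 - d) * m1 s a + d * m2 s a) = 1"
    using policy_sum[OF m1] policy_sum[OF m2] by (simp add: sum.distrib sum_distrib_left[symmetric])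
next
  fix s a assume "a \<notin> Ai" then show "(1 - d) * m1 s a + d * m2 s a = 0"
    using policy_out[OF m1] policy_out[OF m2] by simp
qed

lemma sum_single:
  fixes f :: "'s::finite \<Rightarrow> real"
  assumes "\<And>t. t \<noteq> s \<Longrightarrow> f t = 0"
  shows "(\<Sum>t\<in>UNIV. f t) = f s"
proof -
  have "(\<Sum>t\<in>UNIV. f t) = f s + (\<Sum>t\<in>UNIV - {s}. f t)" by (rule sum.remove) auto
  also have "(\<Sum>t\<in>UNIV - {s}. f t) = 0" using assms by (intro sum.neutral) auto
  finally show ?thesis by simp
qed

lemma NE_adv:
  fixes A :: "'i::finite \<Rightarrow> 'a set" and P :: "'s::finite \<Rightarrow> ('i \<Rightarrow> 'a) \<Rightarrow> 's \<Rightarrow> real"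
    and mustar :: "'i \<Rightarrow> 's \<Rightarrow> 'a \<Rightarrow> real"
  assumes g: "valid_game A P" and erg: "\<And>mu. is_joint_policy A mu \<Longrightarrow> ergodic_chain (chain A P mu)"
    and ms: "is_joint_policy A mustar" and beta: "beta \<ge> 0"
    and D: "\<forall>mu::'i \<Rightarrow> 's \<Rightarrow> 'a \<Rightarrow> real. is_joint_policy A mu \<longrightarrow> Jmv A P r beta mu - Jmv A P r beta mustar =
     (\<Sum>s\<in>UNIV. stat_dist A P mu s * dev A qg mustar mu s)
     + beta * (\<Sum>s\<in>UNIV. stat_dist A P mu s * dev A qr mustar mu s)^2"
    and NE: "strict_local_NE A P r beta mustar"
    and m: "is_policy (A i) m" and ms': "\<And>s'. s' \<noteq> s \<Longrightarrow> m s' = mustar i s'" and mne: "m \<noteq> mustar i"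
  shows "dev A qg mustar (mustar(i := m)) s < 0"
proof -
  obtain db where db: "0 < db" "db \<le> 1" and hyp: "\<forall>d. 0 < d \<and> d \<le> db \<longrightarrow>
          (\<forall>i m. is_policy (A i) m \<and> m \<noteq> mustar i \<longrightarrow>
             Jmv A P r beta mustar > Jmv A P r beta (mustar(i := mix db (mustar i) m)))"
    using NE unfolding strict_local_NE_def by blast
  define mu where "mu = mustar(i := mix db (mustar i) m)"
  have mui: "is_policy (A i) (mustar i)" using ms unfolding is_joint_policy_def by blast
  have mu: "is_joint_policy A mu" unfolding mu_def
    by (intro joint_upd ms mix_policy mui m) (use db in auto)
  have lt: "Jmv A P r beta mu < Jmv A P r beta mustar" using hyp db m mne unfolding mu_def by blast
  let ?p = "stat_dist A P mu s"
  have ppos: "?p > 0" by (rule stat_dist_props(2)[OF g erg mu])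
  have dz: "dev A q mustar mu t = (if t = s then db * dev A q mustar (mustar(i := m)) s else 0)" for q t
  proof (cases "t = s")
    case True then show ?thesis unfolding mu_def dev_mix by simp
  next
    case False
    then show ?thesis unfolding mu_def dev_mix using dev_same[of m t mustar i A q] ms'[OF False] by simp
  qed
  have sq: "(\<Sum>t\<in>UNIV. stat_dist A P mu t * dev A q mustar mu t) = ?p * (db * dev A q mustar (mustar(i := m)) s)" for q
    by (subst sum_single[of s]) (simp_all add: dz)
  have e1: "Jmv A P r beta mu - Jmv A P r beta mustar = (\<Sum>t\<in>UNIV. stat_dist A P mu t * dev A qg mustar mu t)
     + beta * (\<Sum>t\<in>UNIV. stat_dist A P mu t * dev A qr mustar mu t)^2"
    using D mu by blast
  have e2: "Jmv A P r beta mu - Jmv A P r beta mustar = ?p * (db * dev A qg mustar (mustar(i := m)) s)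
      + beta * (?p * (db * dev A qr mustar (mustar(i := m)) s))^2"
    using e1 unfolding sq .
  show ?thesis
  proof (rule ccontr)
    assume "\<not> ?thesis"
    then have "0 \<le> ?p * (db * dev A qg mustar (mustar(i := m)) s)" using ppos db by simp
    moreover have "0 \<le> beta * (?p * (db * dev A qr mustar (mustar(i := m)) s))^2" using beta by simp
    ultimately show False using lt e2 by linarith
  qed
qed

lemma pure_form:
  assumes m: "is_policy Ai m" and fin: "finite Ai" and b0: "b0 \<in> Ai" and one: "m s b0 = 1"
  shows "m s x = (if x = b0 then 1 else 0)"
proof -
  have "(\<Sum>b\<in>Ai. m s b) = m s b0 + (\<Sum>b\<in>Ai - {b0}. m s b)" by (rule sum.remove[OF fin b0])
  then have z: "(\<Sum>b\<in>Ai - {b0}. m s b) = 0" using policy_sum[OF m] one by simp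
  have "\<forall>b\<in>Ai - {b0}. m s b = 0"
    using z sum_nonneg_eq_0_iff[of "Ai - {b0}" "m s"] fin policy_nonneg[OF m] by simp
  then show ?thesis using one policy_out[OF m] by (cases "x \<in> Ai") auto
qed

lemma determ:
  fixes A :: "'i::finite \<Rightarrow> 'a set" and mustar :: "'i \<Rightarrow> 's::finite \<Rightarrow> 'a \<Rightarrow> real"
  assumes g: "valid_game A P" and ms: "is_joint_policy A mustar"
    and ADV: "\<And>i s m. is_policy (A i) m \<Longrightarrow> (\<And>s'. s' \<noteq> s \<Longrightarrow> m s' = mustar i s') \<Longrightarrow> m \<noteq> mustar i
       \<Longrightarrow> dev A qg mustar (mustar(i := m)) s < 0"
  shows "\<exists>b\<in>A i. mustar i s b = 1"
proof (rule ccontr)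
  assume no: "\<not> ?thesis"
  have mi: "is_policy (A i) (mustar i)" using ms unfolding is_joint_policy_def by blast
  have fin: "finite (A i)" using g unfolding valid_game_def by blast
  let ?u = "mustar i s"
  have s1: "(\<Sum>b\<in>A i. ?u b) = 1" by (rule policy_sum[OF mi])
  have nn: "0 \<le> ?u b" for b by (rule policy_nonneg[OF mi])
  have "\<exists>b1\<in>A i. ?u b1 > 0"
  proof (rule ccontr)
    assume "\<not> ?thesis"
    then have "(\<Sum>b\<in>A i. ?u b) \<le> 0" by (intro sum_nonpos) (auto simp: not_less)
    then show False using s1 by simp
  qed
  then obtain b1 where b1: "b1 \<in> A i" "?u b1 > 0" by blast
  have "?u b1 \<noteq> 1" using no b1 by blast
  have "(\<Sum>b\<in>A i. ?u b) = ?u b1 + (\<Sum>b\<in>A i - {b1}. ?u b)" by (rule sum.remove[OF fin b1(1)])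
  moreover have "?u b1 \<le> 1" using s1 member_le_sum[of b1 "A i" ?u] b1 fin nn by simp
  ultimately have "(\<Sum>b\<in>A i - {b1}. ?u b) > 0" using s1 \<open>?u b1 \<noteq> 1\<close> by linarith
  then have "\<exists>b2\<in>A i - {b1}. ?u b2 > 0"
    by (metis (no_types, lifting) not_le sum_nonpos)
  then obtain b2 where b2: "b2 \<in> A i" "b2 \<noteq> b1" "?u b2 > 0" by blast
  define e where "e = min (?u b1) (?u b2)"
  have e: "e > 0" "e \<le> ?u b1" "e \<le> ?u b2" unfolding e_def using b1 b2 by auto
  define w where "w x = (if x = b1 then e else 0) - (if x = b2 then e else 0)" for x
  define mm where "mm c = (mustar i)(s := (\<lambda>x. ?u x + c * w x))" for c :: real
  have wsum: "(\<Sum>x\<in>A i. w x) = 0"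
    unfolding w_def using b1 b2 fin by (simp add: sum_subtractf)
  have pol: "is_policy (A i) (mm c)" if c: "c = 1 \<or> c = -1" for c
    unfolding is_policy_def
  proof (intro conjI allI impI)
    fix t x show "0 \<le> mm c t x"
    proof (cases "t = s")
      case True
      then show ?thesis unfolding mm_def w_def using c e nn[of x] b2(2) by auto
    next
      case False then show ?thesis unfolding mm_def using policy_nonneg[OF mi] by simp
    qed
  next
    fix t show "(\<Sum>x\<in>A i. mm c t x) = 1"
    proof (cases "t = s")
      case True
      then have "(\<Sum>x\<in>A i. mm c t x) = (\<Sum>x\<in>A i. ?u x) + c * (\<Sum>x\<in>A i. w x)"
        unfolding mm_def by (simp add: sum.distrib sum_distrib_left)
      then show ?thesis using s1 wsum by simp
    next
      case False then show ?thesis unfolding mm_def using policy_sum[OF mi] by simp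
    qed
  next
    fix t x assume "x \<notin> A i"
    then have "x \<noteq> b1" "x \<noteq> b2" using b1 b2 by auto
    then show "mm c t x = 0" unfolding mm_def w_def using policy_out[OF mi \<open>x \<notin> A i\<close>] by simp
  qed
  have other: "mm c s' = mustar i s'" if "s' \<noteq> s" for c s' unfolding mm_def using that by simp
  have ne: "mm c \<noteq> mustar i" if "c \<noteq> 0" for c
  proof
    assume "mm c = mustar i"
    then have "mm c s b1 = ?u b1" by simp
    then show False unfolding mm_def w_def using b2(2) e(1) that by simp
  qed
  have devc: "dev A qg mustar (mustar(i := mm c)) s = c * (\<Sum>a\<in>joint_actions A. w (a i) * (\<Prod>j\<in>UNIV - {i}. mustar j s (a j)) * qg s a)" for c
    unfolding dev_def jp_upd_diff sum_distrib_left
    by (rule sum.cong) (simp_all add: mm_def)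
  have "dev A qg mustar (mustar(i := mm 1)) s < 0" by (rule ADV[OF pol other ne]) simp_all
  moreover have "dev A qg mustar (mustar(i := mm (-1))) s < 0" by (rule ADV[OF pol other ne]) simp_all
  ultimately show False unfolding devc by simp
qed

lemma pure_jp:
  assumes "\<And>j x. mu j s x = (if x = al j then 1 else 0)"
  shows "joint_prob mu s a = (if a = al then 1 else 0)"
proof (cases "a = al")
  case True then show ?thesis unfolding joint_prob_def using assms by simp
next
  case False
  then obtain j where "a j \<noteq> al j" by auto
  then have "mu j s (a j) = 0" using assms by simp
  then show ?thesis unfolding joint_prob_def using False by (simp add: prod_zero_iff) blast
qed

lemma pure_sum:
  assumes "\<And>j x. mu j s x = (if x = al j then 1 else 0)" and "al \<in> joint_actions A"
    and fin: "finite (joint_actions A)"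
  shows "(\<Sum>a\<in>joint_actions A. joint_prob mu s a * f a) = f al"
proof -
  have "(\<Sum>a\<in>joint_actions A. joint_prob mu s a * f a) = (\<Sum>a\<in>joint_actions A. if a = al then f a else 0)"
    by (rule sum.cong) (simp_all add: pure_jp[where mu=mu and s=s and al=al, OF assms(1)])
  also have "\<dots> = f al" using assms(2) fin by (simp add: sum.delta')
  finally show ?thesis .
qed

lemma pure_dev:
  assumes "\<And>j x. mustar j s x = (if x = al j then 1 else 0)" and "al \<in> joint_actions A"
    and "\<And>j x. mu j s x = (if x = be j then 1 else 0)" and "be \<in> joint_actions A"
    and fin: "finite (joint_actions A)"
  shows "dev A q mustar mu s = q s be - q s al"
  unfolding dev_def left_diff_distrib sum_subtractf
  using pure_sum[where mu=mustar and s=s and al=al, OF assms(1,2) fin] pure_sum[where mu=mu and s=s and al=be, OF assms(3,4) fin] by simp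

definition ind :: "('i \<Rightarrow> 'a) \<Rightarrow> ('i \<Rightarrow> 'a) \<Rightarrow> 'i \<Rightarrow> real" where
  "ind al a k = (if a k \<noteq> al k then 1 else 0)"

definition wcnt :: "('i::finite \<Rightarrow> 'a) \<Rightarrow> ('i \<Rightarrow> 'a) \<Rightarrow> real" where
  "wcnt al a = (\<Sum>k\<in>UNIV. ind al a k)"

lemma policy_dev_sum:
  assumes m: "is_policy Ai m" and fin: "finite Ai" and b0: "b0 \<in> Ai"
  shows "(\<Sum>b\<in>Ai. m s b * (if b \<noteq> b0 then 1 else 0)) = 1 - m s b0"
proof -
  have "(\<Sum>b\<in>Ai. m s b * (if b \<noteq> b0 then 1 else 0)) = (\<Sum>b\<in>Ai. m s b - (if b = b0 then m s b else 0))"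
    by (rule sum.cong) auto
  also have "\<dots> = 1 - m s b0" using policy_sum[OF m] fin b0 by (simp add: sum_subtractf sum.delta')
  finally show ?thesis .
qed

lemma E_set:
  fixes A :: "'i::finite \<Rightarrow> 'a set"
  assumes g: "valid_game A P" and x: "is_joint_policy A x" and al: "al \<in> joint_actions A"
  shows "(\<Sum>a\<in>joint_actions A. joint_prob x s a * (\<Prod>k\<in>K. ind al a k)) = (\<Prod>k\<in>K. 1 - x k s (al k))"
proof -
  define f where "f i b = x i s b * (if i \<in> K then (if b \<noteq> al i then 1 else 0) else 1)" for i b
  have pw: "joint_prob x s a * (\<Prod>k\<in>K. ind al a k) = (\<Prod>i\<in>UNIV. f i (a i))" for a
  proof -
    have "(\<Prod>i\<in>UNIV. f i (a i)) = joint_prob x s a * (\<Prod>i\<in>UNIV. (if i \<in> K then ind al a i else 1))"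
      unfolding f_def joint_prob_def ind_def by (simp add: prod.distrib)
    also have "(\<Prod>i\<in>UNIV. (if i \<in> K then ind al a i else 1)) = (\<Prod>k\<in>UNIV \<inter> K. ind al a k)"
      by (rule prod.inter_restrict[symmetric]) simp
    finally show ?thesis by simp
  qed
  have "(\<Sum>a\<in>joint_actions A. joint_prob x s a * (\<Prod>k\<in>K. ind al a k)) = (\<Prod>i\<in>UNIV. \<Sum>b\<in>A i. f i b)"
    unfolding pw by (rule sum_prod_JA[OF g])
  also have "\<dots> = (\<Prod>i\<in>UNIV. if i \<in> K then 1 - x i s (al i) else 1)"
  proof (rule prod.cong)
    fix i
    have xi: "is_policy (A i) (x i)" using x unfolding is_joint_policy_def by blast
    have fin: "finite (A i)" using g unfolding valid_game_def by blast
    have ali: "al i \<in> A i" using al unfolding joint_actions_def by (auto simp: PiE_iff)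
    show "(\<Sum>b\<in>A i. f i b) = (if i \<in> K then 1 - x i s (al i) else 1)"
    proof (cases "i \<in> K")
      case True then show ?thesis unfolding f_def using policy_dev_sum[OF xi fin ali] by simp
    next
      case False then show ?thesis unfolding f_def using policy_sum[OF xi] by simp
    qed
  qed simp
  also have "\<dots> = (\<Prod>k\<in>UNIV \<inter> K. 1 - x k s (al k))"
    by (rule prod.inter_restrict[symmetric]) simp
  finally show ?thesis by simp
qed

lemma ind01: "ind al a k * ind al a k = ind al a k" "0 \<le> ind al a k" "ind al a k \<le> 1"
  unfolding ind_def by auto

lemma E_moments:
  fixes A :: "'i::finite \<Rightarrow> 'a set" and x :: "'i \<Rightarrow> 's \<Rightarrow> 'a \<Rightarrow> real" and s :: 's
  assumes g: "valid_game A P" and x: "is_joint_policy A x" and al: "al \<in> joint_actions A"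
  defines "Dl \<equiv> (\<Sum>k\<in>UNIV. 1 - x k s (al k))"
  shows "(\<Sum>a\<in>joint_actions A. joint_prob x s a * wcnt al a) = Dl"
    and "(\<Sum>a\<in>joint_actions A. joint_prob x s a * (wcnt al a ^ 2 - wcnt al a)) \<le> Dl ^ 2"
proof -
  have dnn: "0 \<le> 1 - x k s (al k)" for k
  proof -
    have xi: "is_policy (A k) (x k)" using x unfolding is_joint_policy_def by blast
    have fin: "finite (A k)" using g unfolding valid_game_def by blast
    have "x k s (al k) \<le> (\<Sum>b\<in>A k. x k s b)"
      using al unfolding joint_actions_def
      by (intro member_le_sum) (auto simp: PiE_iff intro: policy_nonneg[OF xi] fin)
    then show ?thesis using policy_sum[OF xi] by simp
  qed
  have E1: "(\<Sum>a\<in>joint_actions A. joint_prob x s a * ind al a k) = 1 - x k s (al k)" for k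
    using E_set[OF g x al, of s "{k}"] by simp
  show ew: "(\<Sum>a\<in>joint_actions A. joint_prob x s a * wcnt al a) = Dl"
    unfolding wcnt_def Dl_def sum_distrib_left by (subst sum.swap) (simp add: E1)
  have E2: "(\<Sum>a\<in>joint_actions A. joint_prob x s a * (ind al a k * ind al a l))
      = (if k = l then 1 - x k s (al k) else (1 - x k s (al k)) * (1 - x l s (al l)))" for k l
  proof (cases "k = l")
    case True then show ?thesis using E1[of k] by (simp add: ind01)
  next
    case False
    then show ?thesis using E_set[OF g x al, of s "{k, l}"] by simp
  qed
  have "(\<Sum>a\<in>joint_actions A. joint_prob x s a * (wcnt al a ^ 2))
      = (\<Sum>k\<in>UNIV. \<Sum>l\<in>UNIV. \<Sum>a\<in>joint_actions A. joint_prob x s a * (ind al a k * ind al a l))"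
  proof -
    have pw: "joint_prob x s a * (wcnt al a ^ 2) = (\<Sum>k\<in>UNIV. \<Sum>l\<in>UNIV. joint_prob x s a * (ind al a k * ind al a l))" for a
    proof -
      have "wcnt al a ^ 2 = (\<Sum>k\<in>UNIV. \<Sum>l\<in>UNIV. ind al a k * ind al a l)"
        unfolding wcnt_def power2_eq_square by (rule sum_product)
      then show ?thesis by (simp add: sum_distrib_left)
    qed
    have "(\<Sum>a\<in>joint_actions A. joint_prob x s a * (wcnt al a ^ 2))
        = (\<Sum>a\<in>joint_actions A. \<Sum>k\<in>UNIV. \<Sum>l\<in>UNIV. joint_prob x s a * (ind al a k * ind al a l))"
      unfolding pw ..
    also have "\<dots> = (\<Sum>k\<in>UNIV. \<Sum>a\<in>joint_actions A. \<Sum>l\<in>UNIV. joint_prob x s a * (ind al a k * ind al a l))"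
      by (rule sum.swap)
    also have "\<dots> = (\<Sum>k\<in>UNIV. \<Sum>l\<in>UNIV. \<Sum>a\<in>joint_actions A. joint_prob x s a * (ind al a k * ind al a l))"
      by (rule sum.cong[OF refl], rule sum.swap)
    finally show ?thesis .
  qed
  also have "\<dots> = (\<Sum>k\<in>UNIV. \<Sum>l\<in>UNIV. (if k = l then 1 - x k s (al k) else (1 - x k s (al k)) * (1 - x l s (al l))))"
    by (simp add: E2)
  also have "\<dots> \<le> (\<Sum>k\<in>UNIV. \<Sum>l\<in>UNIV. ((if k = l then 1 - x k s (al k) else 0) + (1 - x k s (al k)) * (1 - x l s (al l))))"
    by (intro sum_mono) (simp add: dnn)
  also have "\<dots> = Dl + Dl ^ 2"
    unfolding Dl_def power2_eq_square sum.distrib sum_product by (simp add: sum.delta)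
  finally have "(\<Sum>a\<in>joint_actions A. joint_prob x s a * (wcnt al a ^ 2)) \<le> Dl + Dl ^ 2" .
  then show "(\<Sum>a\<in>joint_actions A. joint_prob x s a * (wcnt al a ^ 2 - wcnt al a)) \<le> Dl ^ 2"
    using ew by (simp add: right_diff_distrib sum_subtractf)
qed

lemma wcnt_card: "wcnt al a = real (card {k. a k \<noteq> al k})"
  unfolding wcnt_def ind_def by (simp add: sum.If_cases)

lemma wcnt_le: "wcnt (al :: 'i::finite \<Rightarrow> 'a) a \<le> real CARD('i)"
  unfolding wcnt_card by (simp add: card_mono)

lemma pointwise_g:
  fixes A :: "'i::finite \<Rightarrow> 'a set" and q :: "('i \<Rightarrow> 'a) \<Rightarrow> real"
  assumes a: "a \<in> joint_actions A" and al: "al \<in> joint_actions A"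
    and cc: "\<And>k b. b \<in> A k \<Longrightarrow> b \<noteq> al k \<Longrightarrow> q (al(k := b)) - q al \<le> c"
    and Qm: "\<And>a'. a' \<in> joint_actions A \<Longrightarrow> \<bar>q a'\<bar> \<le> Qm"
    and c: "c < 0"
  shows "q a - q al \<le> c * wcnt al a + (2 * Qm - c * real CARD('i)) * (wcnt al a ^ 2 - wcnt al a)"
proof -
  define D where "D = {k. a k \<noteq> al k}"
  define n where "n = card D"
  have w: "wcnt al a = real n" unfolding n_def D_def wcnt_card ..
  have nN: "real n \<le> real CARD('i)" using wcnt_le[of al a] w by simp
  have Qa: "\<bar>q a\<bar> \<le> Qm" "\<bar>q al\<bar> \<le> Qm" using Qm a al by auto
  consider "n = 0" | "n = 1" | "n \<ge> 2" by linarith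
  then show ?thesis
  proof cases
    case 1
    then have "D = {}" unfolding n_def by simp
    then have "a = al" unfolding D_def by auto
    then show ?thesis using w 1 by simp
  next
    case 2
    then obtain k where Dk: "D = {k}" unfolding n_def by (meson card_1_singletonE)
    then have "a = al(k := a k)" unfolding D_def by (auto simp: fun_eq_iff)
    moreover have "a k \<in> A k" using a unfolding joint_actions_def by (auto simp: PiE_iff)
    moreover have "a k \<noteq> al k" using Dk unfolding D_def by auto
    ultimately have "q a - q al \<le> c" using cc by metis
    then show ?thesis using w 2 by simp
  next
    case 3
    have "c * real CARD('i) \<le> 0" using c by (simp add: mult_nonpos_nonneg)
    then have C0: "0 \<le> 2 * Qm - c * real CARD('i)" using Qa by linarith
    have "(1::real) \<le> real n ^ 2 - real n"
    proof -
      have "real n ^ 2 - real n = real n * (real n - 1)" by (simp add: power2_eq_square algebra_simps)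
      moreover have "real n \<ge> 2" using 3 by simp
      moreover have "(1::real) * 1 \<le> real n * (real n - 1)"
        by (rule mult_mono) (use \<open>real n \<ge> 2\<close> in auto)
      ultimately show ?thesis by simp
    qed
    then have "(2 * Qm - c * real CARD('i)) * 1 \<le> (2 * Qm - c * real CARD('i)) * (real n ^ 2 - real n)"
      by (rule mult_left_mono) (rule C0)
    then have "2 * Qm - c * real CARD('i) \<le> (2 * Qm - c * real CARD('i)) * (real n ^ 2 - real n)"
      by (simp only: mult_1_right)
    moreover have "c * real CARD('i) \<le> c * real n" using nN c by (simp add: mult_left_mono_neg)
    moreover have "q a - q al \<le> 2 * Qm" using Qa by linarith
    ultimately show ?thesis unfolding w by linarith
  qed
qed

lemma pointwise_r:
  fixes A :: "'i::finite \<Rightarrow> 'a set" and q :: "('i \<Rightarrow> 'a) \<Rightarrow> real"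
  assumes a: "a \<in> joint_actions A" and al: "al \<in> joint_actions A"
    and Qm: "\<And>a'. a' \<in> joint_actions A \<Longrightarrow> \<bar>q a'\<bar> \<le> Qm"
  shows "\<bar>q a - q al\<bar> \<le> 2 * Qm * wcnt al a"
proof (cases "a = al")
  case True then show ?thesis by (simp add: wcnt_def ind_def)
next
  case False
  then obtain k where "a k \<noteq> al k" by auto
  then have "{k. a k \<noteq> al k} \<noteq> {}" by auto
  then have "card {k. a k \<noteq> al k} \<ge> 1" by (simp add: Suc_le_eq card_gt_0_iff)
  then have w1: "wcnt al a \<ge> 1" unfolding wcnt_card by simp
  have Qa: "\<bar>q a\<bar> \<le> Qm" "\<bar>q al\<bar> \<le> Qm" using Qm a al by auto
  then have "0 \<le> Qm" by linarith
  then have "2 * Qm * 1 \<le> 2 * Qm * wcnt al a" using w1 by (intro mult_left_mono) auto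
  then show ?thesis using Qa by linarith
qed

lemma dev_pure_expand:
  fixes A :: "'i::finite \<Rightarrow> 'a set"
  assumes g: "valid_game A P" and x: "is_joint_policy A x" and al: "al \<in> joint_actions A"
    and pure: "\<And>j b. mustar j s b = (if b = al j then 1 else 0)"
  shows "dev A q mustar x s = (\<Sum>a\<in>joint_actions A. joint_prob x s a * (q s a - q s al))"
proof -
  have fin: "finite (joint_actions A)" by (rule JA_finite[OF g])
  have "dev A q mustar x s = (\<Sum>a\<in>joint_actions A. joint_prob x s a * q s a) - (\<Sum>a\<in>joint_actions A. joint_prob mustar s a * q s a)"
    unfolding dev_def by (simp add: left_diff_distrib sum_subtractf)
  also have "(\<Sum>a\<in>joint_actions A. joint_prob mustar s a * q s a) = q s al"
    by (rule pure_sum[where mu=mustar and s=s and al=al, OF pure al fin])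
  also have "q s al = (\<Sum>a\<in>joint_actions A. joint_prob x s a * q s al)"
    using jp_sum[OF g x, of s] by (simp add: sum_distrib_right[symmetric])
  finally show ?thesis by (simp add: right_diff_distrib sum_subtractf)
qed

lemma state_bound_g:
  fixes A :: "'i::finite \<Rightarrow> 'a set"
  assumes g: "valid_game A P" and x: "is_joint_policy A x" and al: "al \<in> joint_actions A"
    and pure: "\<And>j b. mustar j s b = (if b = al j then 1 else 0)"
    and cc: "\<And>k b. b \<in> A k \<Longrightarrow> b \<noteq> al k \<Longrightarrow> q s (al(k := b)) - q s al \<le> c"
    and Qm: "\<And>a'. a' \<in> joint_actions A \<Longrightarrow> \<bar>q s a'\<bar> \<le> Qm"
    and c: "c < 0"
  shows "dev A q mustar x s \<le> c * (\<Sum>k\<in>UNIV. 1 - x k s (al k))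
           + (2 * Qm - c * real CARD('i)) * (\<Sum>k\<in>UNIV. 1 - x k s (al k))^2"
proof -
  let ?C = "2 * Qm - c * real CARD('i)"
  let ?Dl = "(\<Sum>k\<in>UNIV. 1 - x k s (al k))"
  have C0: "0 \<le> ?C"
  proof -
    have "\<bar>q s al\<bar> \<le> Qm" using Qm al by blast
    moreover have "c * real CARD('i) \<le> 0" using c by (simp add: mult_nonpos_nonneg)
    ultimately show ?thesis by linarith
  qed
  have "dev A q mustar x s = (\<Sum>a\<in>joint_actions A. joint_prob x s a * (q s a - q s al))"
    by (rule dev_pure_expand[where mustar=mustar and s=s, OF g x al pure])
  also have "\<dots> \<le> (\<Sum>a\<in>joint_actions A. joint_prob x s a * (c * wcnt al a + ?C * (wcnt al a ^ 2 - wcnt al a)))"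
  proof (rule sum_mono)
    fix a assume a: "a \<in> joint_actions A"
    show "joint_prob x s a * (q s a - q s al) \<le> joint_prob x s a * (c * wcnt al a + ?C * (wcnt al a ^ 2 - wcnt al a))"
      by (rule mult_left_mono[OF pointwise_g[OF a al, of "q s", OF cc Qm c] jp_nonneg[OF x]])
  qed
  also have "\<dots> = c * (\<Sum>a\<in>joint_actions A. joint_prob x s a * wcnt al a)
       + ?C * (\<Sum>a\<in>joint_actions A. joint_prob x s a * (wcnt al a ^ 2 - wcnt al a))"
  proof -
    have "(\<Sum>a\<in>joint_actions A. joint_prob x s a * (c * wcnt al a + ?C * (wcnt al a ^ 2 - wcnt al a)))
       = (\<Sum>a\<in>joint_actions A. c * (joint_prob x s a * wcnt al a) + ?C * (joint_prob x s a * (wcnt al a ^ 2 - wcnt al a)))"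
      by (rule sum.cong) (simp_all only: ring_distribs mult.left_commute)
    also have "\<dots> = c * (\<Sum>a\<in>joint_actions A. joint_prob x s a * wcnt al a)
       + ?C * (\<Sum>a\<in>joint_actions A. joint_prob x s a * (wcnt al a ^ 2 - wcnt al a))"
      by (simp only: sum.distrib sum_distrib_left)
    finally show ?thesis .
  qed
  also have "\<dots> \<le> c * ?Dl + ?C * ?Dl ^ 2"
    using E_moments[OF g x al, of s] C0 by (simp add: mult_left_mono)
  finally show ?thesis .
qed

lemma state_bound_r:
  fixes A :: "'i::finite \<Rightarrow> 'a set"
  assumes g: "valid_game A P" and x: "is_joint_policy A x" and al: "al \<in> joint_actions A"
    and pure: "\<And>j b. mustar j s b = (if b = al j then 1 else 0)"
    and Qm: "\<And>a'. a' \<in> joint_actions A \<Longrightarrow> \<bar>q s a'\<bar> \<le> Qm"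
  shows "\<bar>dev A q mustar x s\<bar> \<le> 2 * Qm * (\<Sum>k\<in>UNIV. 1 - x k s (al k))"
proof -
  have "\<bar>dev A q mustar x s\<bar> = \<bar>\<Sum>a\<in>joint_actions A. joint_prob x s a * (q s a - q s al)\<bar>"
    by (simp add: dev_pure_expand[where mustar=mustar and s=s, OF g x al pure])
  also have "\<dots> \<le> (\<Sum>a\<in>joint_actions A. \<bar>joint_prob x s a * (q s a - q s al)\<bar>)"
    by (rule sum_abs)
  also have "\<dots> \<le> (\<Sum>a\<in>joint_actions A. joint_prob x s a * (2 * Qm * wcnt al a))"
  proof (rule sum_mono)
    fix a assume a: "a \<in> joint_actions A"
    have "\<bar>joint_prob x s a * (q s a - q s al)\<bar> = joint_prob x s a * \<bar>q s a - q s al\<bar>"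
      using jp_nonneg[OF x] by (simp add: abs_mult)
    also have "\<dots> \<le> joint_prob x s a * (2 * Qm * wcnt al a)"
      by (rule mult_left_mono[OF pointwise_r[OF a al, of "q s", OF Qm] jp_nonneg[OF x]])
    finally show "\<bar>joint_prob x s a * (q s a - q s al)\<bar> \<le> joint_prob x s a * (2 * Qm * wcnt al a)" .
  qed
  also have "\<dots> = 2 * Qm * (\<Sum>a\<in>joint_actions A. joint_prob x s a * wcnt al a)"
    by (simp add: sum_distrib_left algebra_simps)
  also have "\<dots> = 2 * Qm * (\<Sum>k\<in>UNIV. 1 - x k s (al k))"
    using E_moments(1)[OF g x al, of s] by simp
  finally show ?thesis .
qed

lemma mix_same: "mix d m m = m"
  unfolding mix_def by (simp add: algebra_simps)

lemma policy_le1: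
  assumes m: "is_policy Ai m" and fin: "finite Ai"
  shows "m s b \<le> 1"
proof (cases "b \<in> Ai")
  case True
  have "m s b \<le> (\<Sum>x\<in>Ai. m s x)" by (rule member_le_sum[OF True _ fin]) (rule policy_nonneg[OF m])
  then show ?thesis using policy_sum[OF m] by simp
next
  case False then show ?thesis using policy_out[OF m] by simp
qed

theorem theorem5:
  fixes A :: "'i::finite \<Rightarrow> 'a set"
    and P :: "'s::finite \<Rightarrow> ('i \<Rightarrow> 'a) \<Rightarrow> 's \<Rightarrow> real"
    and r :: "'s \<Rightarrow> ('i \<Rightarrow> 'a) \<Rightarrow> real"
    and beta :: real
    and mustar :: "'i \<Rightarrow> 's \<Rightarrow> 'a \<Rightarrow> real"
  assumes game: "valid_game A P"
    and ergodic: "\<And>mu. is_joint_policy A mu \<Longrightarrow> ergodic_chain (chain A P mu)"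
    and beta: "beta \<ge> 0"
    and mustar: "is_joint_policy A mustar"
  shows "strict_local_NE A P r beta mustar \<longleftrightarrow> strict_local_max A P r beta mustar"
proof
  assume NE: "strict_local_NE A P r beta mustar"
  obtain qg qr where D0: "\<forall>mu::'i \<Rightarrow> 's \<Rightarrow> 'a \<Rightarrow> real. is_joint_policy A mu \<longrightarrow> Jmv A P r beta mu - Jmv A P r beta mustar =
     (\<Sum>s\<in>UNIV. stat_dist A P mu s * (\<Sum>a\<in>joint_actions A. (joint_prob mu s a - joint_prob mustar s a) * qg s a))
     + beta * (\<Sum>s\<in>UNIV. stat_dist A P mu s * (\<Sum>a\<in>joint_actions A. (joint_prob mu s a - joint_prob mustar s a) * qr s a))^2"
    using J_decomp[OF game ergodic mustar, of r beta] by blast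
  have D: "\<forall>mu::'i \<Rightarrow> 's \<Rightarrow> 'a \<Rightarrow> real. is_joint_policy A mu \<longrightarrow> Jmv A P r beta mu - Jmv A P r beta mustar =
     (\<Sum>s\<in>UNIV. stat_dist A P mu s * dev A qg mustar mu s)
     + beta * (\<Sum>s\<in>UNIV. stat_dist A P mu s * dev A qr mustar mu s)^2"
    using D0 unfolding dev_def .
  have ADV: "dev A qg mustar (mustar(i := m)) s < 0"
    if "is_policy (A i) m" "\<And>s'. s' \<noteq> s \<Longrightarrow> m s' = mustar i s'" "m \<noteq> mustar i" for i s m
    using NE_adv[OF game ergodic mustar beta D NE that] .
  have fin: "finite (A i)" for i using game unfolding valid_game_def by blast
  have finJA: "finite (joint_actions A)" by (rule JA_finite[OF game])
  have mui: "is_policy (A i) (mustar i)" for i using mustar unfolding is_joint_policy_def by blast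
  have det: "\<exists>b\<in>A i. mustar i s b = 1" for i s by (rule determ[where qg=qg]) (rule game, rule mustar, rule ADV, assumption+)
  define astar where "astar i s = (SOME b. b \<in> A i \<and> mustar i s b = 1)" for i s
  have ast: "astar i s \<in> A i \<and> mustar i s (astar i s) = 1" for i s
  proof -
    have "\<exists>b. b \<in> A i \<and> mustar i s b = 1" using det[of i s] by blast
    then show ?thesis unfolding astar_def by (rule someI_ex)
  qed
  have pure: "mustar i s b = (if b = astar i s then 1 else 0)" for i s b
    by (rule pure_form[OF mui[of i] fin[of i] conjunct1[OF ast[of i s]] conjunct2[OF ast[of i s]]])
  define al where "al s = (\<lambda>i. astar i s)" for s
  have alJA: "al s \<in> joint_actions A" for s
    unfolding joint_actions_def al_def using ast by (auto simp: PiE_iff)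
  have pure': "\<And>j b. mustar j s b = (if b = al s j then 1 else 0)" for s
    unfolding al_def by (rule pure)
  define cc where "cc k s b = qg s ((al s)(k := b)) - qg s (al s)" for k s b
  have ccneg: "cc k s b < 0" if b: "b \<in> A k" "b \<noteq> al s k" for k s b
  proof -
    define m where "m = (mustar k)(s := (\<lambda>x. if x = b then 1 else 0))"
    have mp: "is_policy (A k) m" unfolding is_policy_def
    proof (intro conjI allI impI)
      fix t x show "0 \<le> m t x" unfolding m_def using policy_nonneg[OF mui] by simp
    next
      fix t show "(\<Sum>x\<in>A k. m t x) = 1"
        unfolding m_def using policy_sum[OF mui] b(1) fin by (simp add: sum.delta')
    next
      fix t x assume "x \<notin> A k" then show "m t x = 0"
        unfolding m_def using policy_out[OF mui] b(1) by auto
    qed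
    have other: "m s' = mustar k s'" if "s' \<noteq> s" for s' unfolding m_def using that by simp
    have ne: "m \<noteq> mustar k"
    proof
      assume "m = mustar k"
      then have "m s b = mustar k s b" by simp
      then show False unfolding m_def using pure[of k s b] b(2) unfolding al_def by simp
    qed
    have pm: "(mustar(k := m)) j s x = (if x = ((al s)(k := b)) j then 1 else 0)" for j x
      unfolding m_def al_def using pure[of j s x] by auto
    have beJA: "(al s)(k := b) \<in> joint_actions A"
      using alJA[of s] b(1) unfolding joint_actions_def by (auto simp: PiE_iff)
    have "dev A qg mustar (mustar(k := m)) s = qg s ((al s)(k := b)) - qg s (al s)"
      by (rule pure_dev[where mustar=mustar and s=s and al="al s" and mu="mustar(k := m)" and be="(al s)(k := b)",
            OF pure' alJA pm beJA finJA])
    then show ?thesis unfolding cc_def using ADV[where i=k and m=m and s=s, OF mp other ne] by simp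
  qed
  define S where "S = (SIGMA k:(UNIV::'i set). SIGMA s:(UNIV::'s set). A k - {al s k})"
  define cset where "cset = insert (-1) ((\<lambda>(k, s, b). cc k s b) ` S)"
  have finS: "finite S" unfolding S_def using fin by (intro finite_SigmaI) auto
  have fincs: "finite cset" unfolding cset_def using finS by simp
  define c where "c = Max cset"
  have "c \<in> cset" unfolding c_def by (rule Max_in[OF fincs]) (simp add: cset_def)
  then have cneg: "c < 0" unfolding cset_def S_def using ccneg by auto
  have ccle: "qg s ((al s)(k := b)) - qg s (al s) \<le> c" if "b \<in> A k" "b \<noteq> al s k" for k s b
  proof -
    have "(k, s, b) \<in> S" unfolding S_def using that by auto
    then have "cc k s b \<in> cset" unfolding cset_def by force
    then show ?thesis unfolding c_def cc_def by (rule Max_ge[OF fincs])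
  qed
  define Qg where "Qg = (\<Sum>s\<in>UNIV. \<Sum>a\<in>joint_actions A. \<bar>qg s a\<bar>)"
  define Qr where "Qr = (\<Sum>s\<in>UNIV. \<Sum>a\<in>joint_actions A. \<bar>qr s a\<bar>)"
  have Qbound: "\<bar>q s a'\<bar> \<le> (\<Sum>s\<in>UNIV. \<Sum>a\<in>joint_actions A. \<bar>q s a\<bar>)" if "a' \<in> joint_actions A"
    for q :: "'s \<Rightarrow> ('i \<Rightarrow> 'a) \<Rightarrow> real" and s a'
  proof -
    have "\<bar>q s a'\<bar> \<le> (\<Sum>a\<in>joint_actions A. \<bar>q s a\<bar>)" by (rule member_le_sum[OF that _ finJA]) simp
    also have "\<dots> \<le> (\<Sum>s\<in>UNIV. \<Sum>a\<in>joint_actions A. \<bar>q s a\<bar>)"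
      by (rule member_le_sum[of s UNIV "\<lambda>s. \<Sum>a\<in>joint_actions A. \<bar>q s a\<bar>"]) (simp_all add: sum_nonneg)
    finally show ?thesis .
  qed
  have QgB: "\<bar>qg s a'\<bar> \<le> Qg" if "a' \<in> joint_actions A" for s a' unfolding Qg_def by (rule Qbound[OF that])
  have QrB: "\<bar>qr s a'\<bar> \<le> Qr" if "a' \<in> joint_actions A" for s a' unfolding Qr_def by (rule Qbound[OF that])
  have Qg0: "0 \<le> Qg" unfolding Qg_def by (intro sum_nonneg) simp
  have Qr0: "0 \<le> Qr" unfolding Qr_def by (intro sum_nonneg) simp
  define N where "N = real CARD('i)"
  have N0: "0 \<le> N" unfolding N_def by simp
  define C where "C = 2 * Qg - c * N"
  have C0: "0 \<le> C"
  proof -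
    have "c * N \<le> 0" using cneg N0 by (simp add: mult_nonpos_nonneg)
    then show ?thesis unfolding C_def using Qg0 by linarith
  qed
  define K where "K = N * (C + 4 * beta * Qr ^ 2)"
  have K0: "0 \<le> K" unfolding K_def using N0 C0 beta by simp
  define db where "db = min 1 ((- c) / (K + 1))"
  have db0: "0 < db" unfolding db_def using cneg K0 by (simp add: divide_neg_pos)
  show "strict_local_max A P r beta mustar" unfolding strict_local_max_def
  proof (intro exI conjI allI impI)
    show "0 < db" by (rule db0)
    show "db \<le> 1" unfolding db_def by simp
  next
    fix d :: real and mu :: "'i \<Rightarrow> 's \<Rightarrow> 'a \<Rightarrow> real"
    assume d: "0 < d \<and> d \<le> db" and mu: "is_joint_policy A mu \<and> mu \<noteq> mustar"
    have d1: "d \<le> 1" and dpos: "0 < d" and dle: "d \<le> (- c) / (K + 1)" using d unfolding db_def by auto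
    have mupol: "is_policy (A i) (mu i)" for i using mu unfolding is_joint_policy_def by blast
    define x where "x = (\<lambda>i. mix d (mustar i) (mu i))"
    have xj: "is_joint_policy A x" unfolding x_def is_joint_policy_def
      using mix_policy[OF mui mupol] dpos d1 by simp
    define E where "E s = (\<Sum>k\<in>UNIV. 1 - mu k s (al s k))" for s
    have Dl: "(\<Sum>k\<in>UNIV. 1 - x k s (al s k)) = d * E s" for s
    proof -
      have "1 - x k s (al s k) = d * (1 - mu k s (al s k))" for k
        unfolding x_def mix_def using pure[of k s "al s k"] unfolding al_def by (simp add: algebra_simps)
      then show ?thesis unfolding E_def by (simp add: sum_distrib_left)
    qed
    have term01: "0 \<le> 1 - mu k s b" "1 - mu k s b \<le> 1" for k s b
      using policy_le1[OF mupol fin] policy_nonneg[OF mupol] by (auto simp: algebra_simps)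
    have E0: "0 \<le> E s" for s unfolding E_def using term01 by (intro sum_nonneg) auto
    have EN: "E s \<le> N" for s
    proof -
      have "E s \<le> of_nat (card (UNIV::'i set)) * 1" unfolding E_def
        by (rule sum_bounded_above) (use term01 in auto)
      then show ?thesis unfolding N_def by simp
    qed
    have bg: "dev A qg mustar x s \<le> c * (d * E s) + C * (d * E s)^2"
      and br: "\<bar>dev A qr mustar x s\<bar> \<le> 2 * Qr * (d * E s)" for s
    proof -
      have p1: "\<And>j b. mustar j s b = (if b = al s j then 1 else 0)"
        unfolding al_def by (rule pure)
      have c1: "\<And>k b. b \<in> A k \<Longrightarrow> b \<noteq> al s k \<Longrightarrow> qg s ((al s)(k := b)) - qg s (al s) \<le> c"
        by (rule ccle)
      have qg1: "\<And>a'. a' \<in> joint_actions A \<Longrightarrow> \<bar>qg s a'\<bar> \<le> Qg" by (rule QgB)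
      have qr1: "\<And>a'. a' \<in> joint_actions A \<Longrightarrow> \<bar>qr s a'\<bar> \<le> Qr" by (rule QrB)
      have al1: "al s \<in> joint_actions A" by (rule alJA)
      show "dev A qg mustar x s \<le> c * (d * E s) + C * (d * E s)^2"
        using state_bound_g[where mustar=mustar and s=s and al="al s" and q=qg and c=c and Qm=Qg and A=A and x=x,
          OF game xj al1 p1 c1 qg1 cneg]
        unfolding Dl C_def N_def by simp
      show "\<bar>dev A qr mustar x s\<bar> \<le> 2 * Qr * (d * E s)"
        using state_bound_r[where mustar=mustar and s=s and al="al s" and q=qr and Qm=Qr and A=A and x=x,
          OF game xj al1 p1 qr1] unfolding Dl by simp
    qed
    let ?p = "stat_dist A P x"
    have ppos: "?p s > 0" for s by (rule stat_dist_props(2)[OF game ergodic xj])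
    have psum: "(\<Sum>s\<in>UNIV. ?p s) = 1" by (rule stationary_sum[OF stat_dist_props(1)[OF game ergodic xj]])
    define T where "T = (\<Sum>s\<in>UNIV. ?p s * E s)"
    have T0: "0 \<le> T" unfolding T_def using ppos E0 by (intro sum_nonneg) (simp add: less_imp_le)
    have TN: "T \<le> N"
    proof -
      have "T \<le> (\<Sum>s\<in>UNIV. ?p s * N)" unfolding T_def
        using ppos EN by (intro sum_mono mult_left_mono) (auto simp: less_imp_le)
      also have "\<dots> = N" using psum by (simp add: sum_distrib_right[symmetric])
      finally show ?thesis .
    qed
    have Tpos: "0 < T"
    proof -
      obtain k s b where neq: "mu k s b \<noteq> mustar k s b"
        using mu by (auto simp: fun_eq_iff)
      have "mu k s (al s k) \<noteq> 1"
      proof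
        assume one: "mu k s (al s k) = 1"
        have "al s k \<in> A k" using alJA[of s] unfolding joint_actions_def by (auto simp: PiE_iff)
        then have "mu k s b = (if b = al s k then 1 else 0)" using pure_form[OF mupol[of k] fin[of k] _ one] by blast
        then show False using neq pure[of k s b] unfolding al_def by simp
      qed
      then have tpos: "0 < 1 - mu k s (al s k)" using policy_le1[OF mupol fin, of k s "al s k"] by simp
      have "1 - mu k s (al s k) \<le> E s" unfolding E_def
        by (rule member_le_sum) (use term01 in auto)
      then have Epos: "0 < E s" using tpos by linarith
      have "?p s * E s \<le> T" unfolding T_def
        by (rule member_le_sum) (use ppos E0 in \<open>auto intro: mult_nonneg_nonneg less_imp_le\<close>)
      moreover have "0 < ?p s * E s" using ppos[of s] Epos by simp
      ultimately show ?thesis by linarith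
    qed
    have Jx: "Jmv A P r beta x - Jmv A P r beta mustar =
       (\<Sum>s\<in>UNIV. ?p s * dev A qg mustar x s) + beta * (\<Sum>s\<in>UNIV. ?p s * dev A qr mustar x s)^2"
      using D xj by blast
    have part1: "(\<Sum>s\<in>UNIV. ?p s * dev A qg mustar x s) \<le> (c * d + C * d^2 * N) * T"
    proof -
      have "(\<Sum>s\<in>UNIV. ?p s * dev A qg mustar x s) \<le> (\<Sum>s\<in>UNIV. ?p s * ((c * d + C * d^2 * N) * E s))"
      proof (rule sum_mono)
        fix s
        have "E s ^ 2 \<le> N * E s" using E0[of s] EN[of s] by (simp add: power2_eq_square mult_right_mono)
        then have "C * d^2 * E s ^ 2 \<le> C * d^2 * (N * E s)" using C0 by (simp add: mult_left_mono)
        then have "dev A qg mustar x s \<le> (c * d + C * d^2 * N) * E s"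
          using bg[of s] by (simp add: power_mult_distrib algebra_simps)
        then show "?p s * dev A qg mustar x s \<le> ?p s * ((c * d + C * d^2 * N) * E s)"
          using ppos[of s] by (simp add: mult_left_mono)
      qed
      also have "\<dots> = (c * d + C * d^2 * N) * T" unfolding T_def sum_distrib_left
        by (rule sum.cong) (simp_all add: algebra_simps)
      finally show ?thesis .
    qed
    have part2: "(\<Sum>s\<in>UNIV. ?p s * dev A qr mustar x s)^2 \<le> 4 * Qr^2 * d^2 * N * T"
    proof -
      have "\<bar>\<Sum>s\<in>UNIV. ?p s * dev A qr mustar x s\<bar> \<le> (\<Sum>s\<in>UNIV. \<bar>?p s * dev A qr mustar x s\<bar>)"
        by (rule sum_abs)
      also have "\<dots> \<le> (\<Sum>s\<in>UNIV. ?p s * (2 * Qr * (d * E s)))"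
      proof (rule sum_mono)
        fix s show "\<bar>?p s * dev A qr mustar x s\<bar> \<le> ?p s * (2 * Qr * (d * E s))"
          using br[of s] ppos[of s] by (simp add: abs_mult mult_left_mono)
      qed
      also have "\<dots> = 2 * Qr * d * T" unfolding T_def sum_distrib_left by (rule sum.cong) (simp_all add: algebra_simps)
      finally have ab: "\<bar>\<Sum>s\<in>UNIV. ?p s * dev A qr mustar x s\<bar> \<le> 2 * Qr * d * T" .
      have "(\<Sum>s\<in>UNIV. ?p s * dev A qr mustar x s)^2 = \<bar>\<Sum>s\<in>UNIV. ?p s * dev A qr mustar x s\<bar>^2" by simp
      also have "\<dots> \<le> (2 * Qr * d * T)^2" by (rule power_mono[OF ab]) simp
      also have "\<dots> = 4 * Qr^2 * d^2 * (T * T)" by (simp add: power2_eq_square algebra_simps)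
      also have "\<dots> \<le> 4 * Qr^2 * d^2 * (N * T)"
        by (rule mult_left_mono) (use TN T0 in \<open>simp_all add: mult_right_mono\<close>)
      finally show ?thesis by (simp add: algebra_simps)
    qed
    have "Jmv A P r beta x - Jmv A P r beta mustar \<le> (c * d + C * d^2 * N) * T + beta * (4 * Qr^2 * d^2 * N * T)"
      unfolding Jx using part1 mult_left_mono[OF part2 beta] by linarith
    also have "\<dots> = d * T * (c + d * K)" unfolding K_def by (simp add: power2_eq_square algebra_simps)
    also have "\<dots> < 0"
    proof -
      have "d * (K + 1) \<le> (- c) / (K + 1) * (K + 1)" by (rule mult_right_mono[OF dle]) (use K0 in simp)
      also have "\<dots> = - c" using K0 by simp
      finally have "d * (K + 1) \<le> - c" .
      then have "c + d * K < 0" using dpos by (simp add: algebra_simps)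
      moreover have "0 < d * T" using dpos Tpos by simp
      ultimately show ?thesis by (simp add: mult_pos_neg)
    qed
    finally show "Jmv A P r beta mustar > Jmv A P r beta (\<lambda>i. mix d (mustar i) (mu i))"
      unfolding x_def by simp
  qed
next
  assume MX: "strict_local_max A P r beta mustar"
  then obtain db where db: "0 < db" "db \<le> 1" and hyp: "\<forall>d. 0 < d \<and> d \<le> db \<longrightarrow>
          (\<forall>mu. is_joint_policy A mu \<and> mu \<noteq> mustar \<longrightarrow>
             Jmv A P r beta mustar > Jmv A P r beta (\<lambda>i. mix d (mustar i) (mu i)))"
    unfolding strict_local_max_def by blast
  show "strict_local_NE A P r beta mustar" unfolding strict_local_NE_def
  proof (intro exI conjI allI impI)
    show "0 < db" "db \<le> 1" by (fact db)+
  next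
    fix d i m assume d: "0 < d \<and> d \<le> db" and m: "is_policy (A i) m \<and> m \<noteq> mustar i"
    have j: "is_joint_policy A (mustar(i := m))" using joint_upd[OF mustar] m by blast
    have ne: "mustar(i := m) \<noteq> mustar" using m by (auto simp: fun_eq_iff)
    have eq: "(\<lambda>j. mix d (mustar j) ((mustar(i := m)) j)) = mustar(i := mix d (mustar i) m)"
      by (auto simp: fun_eq_iff mix_same)
    show "Jmv A P r beta mustar > Jmv A P r beta (mustar(i := mix d (mustar i) m))"
      using hyp d j ne unfolding eq[symmetric] by blast
  qed
qed

end
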